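(* Let $\mathbf D_0\in\mathbb R^{m\times p}$ have unit-norm columns and let $J$ be a random support with $|J|=k$, $\Pr(j\in J)=k/p$ and $\Pr(i,j\in J)=\frac{k(k-1)}{p(p-1)}$ for $i\ne j$. If $k\mu(t)<1/2$, then for any $\mathbf W\in\mathcal W_{\mathbf D_0}$ and $\mathbf v\in\mathcal S^p$, $$\mathbb E_J\big\{\mathrm{Tr}\big([\mathbf D_0]_J^\top(\mathbf I-\mathbf P_J(t))[\mathbf D_0]_J\big)\big\}\ge(1-\mathcal K^2)\frac kpt^2,$$ $$\Big|\mathbb E_J\big\{\mathrm{Tr}\big([\boldsymbol\Theta_J(0)[\mathbf D_0]_J^\top-\boldsymbol\Theta_J(t)[\mathbf D(t)]_J^\top][\mathbf D_0]_J\big)\big\}\Big|\le3Q_t^2\,t\,\frac kp\,|||\mathbf D_0|||_2\,k\mu(t),$$ $$\big|\mathbb E_J\{\mathrm{Tr}(\boldsymbol\Theta_J(0)-\boldsymbol\Theta_J(t))\}\big|\le8Q_t^4\,t\,\frac kp\,|||\mathbf D_0|||_2\,k\mu(t),$$ with $\mathcal K\triangleq C_t(|||\mathbf D_0|||_2\sqrt{k/p}+t)$.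
   Context: $\mu_0=\max_{i\ne j}|[\mathbf d_0^i]^\top\mathbf d_0^j|$, $\mu(t)=\mu_0+3t$, $Q_t=1/\sqrt{1-k\mu(t)}$; $\delta_k(\mathbf D_0)$: smallest $\delta$ with $(1-\delta)\|\mathbf z\|^2\le\|[\mathbf D_0]_J\mathbf z\|^2\le(1+\delta)\|\mathbf z\|^2$ for all $|J|=k$; $C_t=1/(\sqrt{1-\delta_k(\mathbf D_0)}-t)$. $\mathcal S^p$ unit sphere; $\mathcal W_{\mathbf D_0}=\{\mathbf W:\mathrm{diag}(\mathbf W^\top\mathbf D_0)=\mathbf 0,\mathrm{diag}(\mathbf W^\top\mathbf W)=\mathbf 1\}$; $\mathbf D(t)=\mathbf D_0\mathrm{Diag}[\cos(\mathbf vt)]+\mathbf W\mathrm{Diag}[\sin(\mathbf vt)]$. $\mathbf M_J$: columns of $\mathbf M$ indexed by $J$; $\boldsymbol\Theta_J(t)=([\mathbf D(t)]_J^\top[\mathbf D(t)]_J)^{-1}$; $\mathbf P_J(t)$ orthogonal projector onto the span of $[\mathbf D(t)]_J$; $|||\cdot|||_2$ spectral norm; $\mathbb E_J$ expectation over $J$ only. *)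

theory Defs
  imports "HOL-Analysis.Analysis" "HOL-Probability.Probability"
begin

text \<open>Matrices: an m x p real matrix is a value of type real^'p^'m; its columns are
  indexed by the finite type 'p (so p = CARD('p)), rows by 'm.  A support J is a set of
  column indices; a J-indexed square matrix (such as a Gram matrix restricted to J, or
  its inverse) is represented as a function 'p => 'p => real whose relevant entries are
  those with both indices in J.  The trace of such a matrix is the sum of its diagonal
  entries over J.  Column order inside [M]_J is irrelevant for all quantities below.\<close>

definition orth_proj :: "'a::euclidean_space set \<Rightarrow> 'a \<Rightarrow> 'a" where
  "orth_proj S x = (THE y. y \<in> S \<and> (\<forall>z\<in>S. inner (x - y) z = 0))"

definition gram :: "real^'p^'m \<Rightarrow> 'p \<Rightarrow> 'p \<Rightarrow> real" where
  "gram D i j = inner (column i D) (column j D)"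

definition inv_on :: "'p set \<Rightarrow> ('p \<Rightarrow> 'p \<Rightarrow> real) \<Rightarrow> 'p \<Rightarrow> 'p \<Rightarrow> real" where
  "inv_on J A = (THE B. (\<forall>i\<in>J. \<forall>j\<in>J. (\<Sum>l\<in>J. A i l * B l j) = (if i = j then 1 else 0))
                      \<and> (\<forall>i j. i \<notin> J \<or> j \<notin> J \<longrightarrow> B i j = 0))"

definition Theta :: "real^'p^'m \<Rightarrow> 'p set \<Rightarrow> 'p \<Rightarrow> 'p \<Rightarrow> real" where
  "Theta D J = inv_on J (gram D)"

definition projJ :: "real^'p^'m \<Rightarrow> 'p set \<Rightarrow> real^'m \<Rightarrow> real^'m" where
  "projJ D J = orth_proj (span ((\<lambda>j. column j D) ` J))"

definition Dt :: "real^'p^'m \<Rightarrow> real^'p^'m \<Rightarrow> real^'p \<Rightarrow> real \<Rightarrow> real^'p^'m" where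
  "Dt D0 W v t = (\<chi> i j. D0$i$j * cos (v$j * t) + W$i$j * sin (v$j * t))"

text \<open>Mutual coherence mu_0 = max_{i~=j} |d_i^T d_j| (taken to be 0 if there is only one column).\<close>
definition mu0 :: "real^'p^'m \<Rightarrow> real" where
  "mu0 D = Max (insert 0 {\<bar>inner (column i D) (column j D)\<bar> | i j. i \<noteq> j})"

definition mu :: "real^'p^'m \<Rightarrow> real \<Rightarrow> real" where
  "mu D t = mu0 D + 3 * t"

definition Qt :: "real^'p^'m \<Rightarrow> nat \<Rightarrow> real \<Rightarrow> real" where
  "Qt D k t = 1 / sqrt (1 - real k * mu D t)"

definition rip :: "real^'p^'m \<Rightarrow> nat \<Rightarrow> real" where
  "rip D k = Inf {\<delta>. \<forall>J (z::'p \<Rightarrow> real). card J = k \<longrightarrow>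
      (1 - \<delta>) * (\<Sum>j\<in>J. (z j)\<^sup>2) \<le> (norm (\<Sum>j\<in>J. z j *\<^sub>R column j D))\<^sup>2 \<and>
      (norm (\<Sum>j\<in>J. z j *\<^sub>R column j D))\<^sup>2 \<le> (1 + \<delta>) * (\<Sum>j\<in>J. (z j)\<^sup>2)}"

definition Ct :: "real^'p^'m \<Rightarrow> nat \<Rightarrow> real \<Rightarrow> real" where
  "Ct D k t = 1 / (sqrt (1 - rip D k) - t)"

definition specnorm :: "real^'p^'m \<Rightarrow> real" where
  "specnorm D = onorm (\<lambda>x. D *v x)"

end

theory Submission
  imports Defs
begin

lemma cos_upper: "cos (x::real) \<le> 1 - x^2/2 + x^4/24"
proof -
  obtain s where "cos x = (\<Sum>m<4. cos_coeff m * x ^ m) + (cos (s + 1/2 * real 4 * pi) / fact 4) * x ^ 4"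
    using Maclaurin_cos_expansion by blast
  moreover have "(\<Sum>m<4. cos_coeff m * x ^ m) = 1 - x^2/2"
    by (simp add: eval_nat_numeral cos_coeff_def, presburger)
  moreover have "(cos (s + 1/2 * real 4 * pi) / fact 4) * x ^ 4 \<le> x^4/24"
  proof -
    have "cos (s + 1/2 * real 4 * pi) \<le> 1" by simp
    moreover have "x^4 \<ge> 0" by simp
    ultimately have "cos (s + 1/2 * real 4 * pi) * x^4 \<le> 1 * x^4" by (rule mult_right_mono)
    thus ?thesis by (simp add: fact_numeral)
  qed
  ultimately show ?thesis by linarith
qed

lemma cos_lower: "1 - x^2/2 \<le> cos (x::real)"
proof -
  obtain s where "cos x = (\<Sum>m<2. cos_coeff m * x ^ m) + (cos (s + 1/2 * real 2 * pi) / fact 2) * x ^ 2"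
    using Maclaurin_cos_expansion by blast
  moreover have "(\<Sum>m<2. cos_coeff m * x ^ m) = 1"
    by (simp add: eval_nat_numeral cos_coeff_def)
  moreover have "(cos (s + 1/2 * real 2 * pi) / fact 2) * x ^ 2 \<ge> (-(x^2))/2"
  proof -
    have "cos (s + 1/2 * real 2 * pi) \<ge> -1" by simp
    moreover have "x^2 \<ge> 0" by simp
    ultimately have "cos (s + 1/2 * real 2 * pi) * x^2 \<ge> (-1) * x^2" by (rule mult_right_mono)
    thus ?thesis by (simp add: fact_numeral)
  qed
  ultimately show ?thesis by linarith
qed

lemma l1_bound:
  fixes G :: "'a \<Rightarrow> 'a \<Rightarrow> real"
  assumes fin: "finite S" and diag: "\<forall>i\<in>S. G i i = 1"
    and off: "\<forall>i\<in>S. \<forall>l\<in>S. i \<noteq> l \<longrightarrow> \<bar>G i l\<bar> \<le> \<mu>"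
    and eq: "\<forall>i\<in>S. (\<Sum>l\<in>S. G i l * y l) = r i"
  shows "(\<Sum>i\<in>S. \<bar>y i\<bar>) \<le> (\<Sum>i\<in>S. \<bar>r i\<bar>) + (real (card S) - 1) * \<mu> * (\<Sum>i\<in>S. \<bar>y i\<bar>)"
proof -
  have each: "\<bar>y i\<bar> \<le> \<bar>r i\<bar> + \<mu> * ((\<Sum>l\<in>S. \<bar>y l\<bar>) - \<bar>y i\<bar>)" if i: "i \<in> S" for i
  proof -
    have "(\<Sum>l\<in>S. G i l * y l) = G i i * y i + (\<Sum>l\<in>S-{i}. G i l * y l)"
      using fin i by (simp add: sum.remove)
    hence "y i = r i - (\<Sum>l\<in>S-{i}. G i l * y l)" using eq diag i by auto
    hence "\<bar>y i\<bar> \<le> \<bar>r i\<bar> + \<bar>\<Sum>l\<in>S-{i}. G i l * y l\<bar>" by linarith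
    also have "\<bar>\<Sum>l\<in>S-{i}. G i l * y l\<bar> \<le> (\<Sum>l\<in>S-{i}. \<mu> * \<bar>y l\<bar>)"
    proof -
      have "\<bar>\<Sum>l\<in>S-{i}. G i l * y l\<bar> \<le> (\<Sum>l\<in>S-{i}. \<bar>G i l * y l\<bar>)" by (rule sum_abs)
      also have "\<dots> \<le> (\<Sum>l\<in>S-{i}. \<mu> * \<bar>y l\<bar>)"
        apply (rule sum_mono)
        using off i by (auto simp: abs_mult intro!: mult_right_mono)
      finally show ?thesis .
    qed
    also have "(\<Sum>l\<in>S-{i}. \<mu> * \<bar>y l\<bar>) = \<mu> * ((\<Sum>l\<in>S. \<bar>y l\<bar>) - \<bar>y i\<bar>)"
      using fin i by (simp add: sum_distrib_left[symmetric] sum_diff1)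
    finally show ?thesis by simp
  qed
  have "(\<Sum>i\<in>S. \<bar>y i\<bar>) \<le> (\<Sum>i\<in>S. \<bar>r i\<bar> + \<mu> * ((\<Sum>l\<in>S. \<bar>y l\<bar>) - \<bar>y i\<bar>))"
    by (rule sum_mono) (use each in auto)
  also have "\<dots> = (\<Sum>i\<in>S. \<bar>r i\<bar>) + (real (card S) - 1) * \<mu> * (\<Sum>i\<in>S. \<bar>y i\<bar>)"
    by (simp add: sum.distrib sum_distrib_left[symmetric] sum_subtractf algebra_simps)
  finally show ?thesis .
qed

lemma l1_zero:
  fixes G :: "'a \<Rightarrow> 'a \<Rightarrow> real"
  assumes fin: "finite S" and diag: "\<forall>i\<in>S. G i i = 1"
    and off: "\<forall>i\<in>S. \<forall>l\<in>S. i \<noteq> l \<longrightarrow> \<bar>G i l\<bar> \<le> \<mu>"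
    and a: "(real (card S) - 1) * \<mu> < 1"
    and eq: "\<forall>i\<in>S. (\<Sum>l\<in>S. G i l * y l) = 0"
    and j: "j \<in> S"
  shows "y j = 0"
proof -
  have "(\<Sum>i\<in>S. \<bar>y i\<bar>) \<le> (\<Sum>i\<in>S. \<bar>(0::real)\<bar>) + (real (card S) - 1) * \<mu> * (\<Sum>i\<in>S. \<bar>y i\<bar>)"
    by (rule l1_bound[OF fin diag off]) (use eq in auto)
  hence "(1 - (real (card S) - 1) * \<mu>) * (\<Sum>i\<in>S. \<bar>y i\<bar>) \<le> 0" by (simp add: algebra_simps)
  moreover have "0 \<le> (\<Sum>i\<in>S. \<bar>y i\<bar>)" by (simp add: sum_nonneg)
  ultimately have "(\<Sum>i\<in>S. \<bar>y i\<bar>) = 0" using a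
    by (smt (verit) mult_pos_pos)
  hence "\<bar>y j\<bar> = 0" using fin j by (simp add: sum_nonneg_eq_0_iff)
  thus ?thesis by simp
qed

definition inv_prop :: "'p set \<Rightarrow> ('p \<Rightarrow> 'p \<Rightarrow> real) \<Rightarrow> ('p \<Rightarrow> 'p \<Rightarrow> real) \<Rightarrow> bool" where
  "inv_prop J A B \<longleftrightarrow> (\<forall>i\<in>J. \<forall>j\<in>J. (\<Sum>l\<in>J. A i l * B l j) = (if i = j then 1 else 0))
                      \<and> (\<forall>i j. i \<notin> J \<or> j \<notin> J \<longrightarrow> B i j = 0)"

lemma inv_on_prop:
  fixes G :: "'p::finite \<Rightarrow> 'p \<Rightarrow> real"
  assumes diag: "\<forall>i\<in>S. G i i = 1"
    and off: "\<forall>i\<in>S. \<forall>l\<in>S. i \<noteq> l \<longrightarrow> \<bar>G i l\<bar> \<le> \<mu>"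
    and a: "(real (card S) - 1) * \<mu> < 1"
  shows "inv_prop S G (inv_on S G)"
proof -
  have fin: "finite S" by simp
  define f :: "real^'p \<Rightarrow> real^'p" where
    "f x = (\<chi> i. if i \<in> S then (\<Sum>l\<in>S. G i l * x$l) else x$i)" for x
  have lin: "linear f"
    by (rule linearI) (auto simp: f_def vec_eq_iff sum.distrib sum_distrib_left algebra_simps)
  have inj: "inj f"
    unfolding linear_injective_0[OF lin]
  proof (intro allI impI)
    fix x assume fx: "f x = 0"
    show "x = 0"
    proof (subst vec_eq_iff, intro allI)
      fix j
      show "x $ j = 0 $ j"
      proof (cases "j \<in> S")
        case True
        have "\<forall>i\<in>S. (\<Sum>l\<in>S. G i l * x$l) = 0"
        proof
          fix i assume iS: "i \<in> S"
          have "f x $ i = 0" using fx by simp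
          thus "(\<Sum>l\<in>S. G i l * x$l) = 0" using iS by (simp add: f_def)
        qed
        from l1_zero[OF fin diag off a this True] show ?thesis by simp
      next
        case False
        thus ?thesis using fx by (auto simp: f_def vec_eq_iff dest: spec[of _ j])
      qed
    qed
  qed
  have surj: "surj f" using linear_injective_imp_surjective[OF lin inj] by simp
  define B where "B l j = (if l \<in> S \<and> j \<in> S then (SOME x. f x = axis j 1) $ l else 0)" for l j
  have exB: "inv_prop S G B"
    unfolding inv_prop_def
  proof (intro conjI ballI allI impI)
    fix i j assume i: "i \<in> S" and j: "j \<in> S"
    obtain x where x: "f x = axis j 1" using surj by (metis surjD)
    hence sx: "f (SOME x. f x = axis j 1) = axis j 1" by (rule someI)
    have "(\<Sum>l\<in>S. G i l * B l j) = (\<Sum>l\<in>S. G i l * (SOME x. f x = axis j 1) $ l)"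
      using j by (simp add: B_def)
    also have "\<dots> = f (SOME x. f x = axis j 1) $ i" using i by (simp add: f_def)
    also have "\<dots> = (if i = j then 1 else 0)" by (subst sx) (simp add: axis_def)
    finally show "(\<Sum>l\<in>S. G i l * B l j) = (if i = j then 1 else 0)" .
  next
    fix i j assume "i \<notin> S \<or> j \<notin> S" thus "B i j = 0" by (auto simp: B_def)
  qed
  have uniq: "B1 = B2" if h1: "inv_prop S G B1" and h2: "inv_prop S G B2" for B1 B2
  proof (intro ext)
    fix l j
    show "B1 l j = B2 l j"
    proof (cases "l \<in> S \<and> j \<in> S")
      case True
      have "\<forall>i\<in>S. (\<Sum>l\<in>S. G i l * (B1 l j - B2 l j)) = 0"
      proof
        fix i assume i: "i \<in> S"
        have "(\<Sum>l\<in>S. G i l * (B1 l j - B2 l j)) = (\<Sum>l\<in>S. G i l * B1 l j) - (\<Sum>l\<in>S. G i l * B2 l j)"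
          by (simp add: algebra_simps sum_subtractf)
        thus "(\<Sum>l\<in>S. G i l * (B1 l j - B2 l j)) = 0" using h1 h2 i True by (simp add: inv_prop_def)
      qed
      from l1_zero[OF fin diag off a this] True show ?thesis by simp
    next
      case False thus ?thesis using h1 h2 by (auto simp: inv_prop_def)
    qed
  qed
  have "\<exists>!B. inv_prop S G B" using exB uniq by blast
  hence "inv_prop S G (THE B. inv_prop S G B)" by (rule theI')
  moreover have "inv_on S G = (THE B. inv_prop S G B)" by (simp add: inv_on_def inv_prop_def)
  ultimately show ?thesis by simp
qed

lemma inv_bounds:
  fixes G :: "'p::finite \<Rightarrow> 'p \<Rightarrow> real"
  assumes diag: "\<forall>i\<in>S. G i i = 1"
    and off: "\<forall>i\<in>S. \<forall>l\<in>S. i \<noteq> l \<longrightarrow> \<bar>G i l\<bar> \<le> \<mu>"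
    and a: "(real (card S) - 1) * \<mu> < 1" and mu: "0 \<le> \<mu>"
    and B: "inv_prop S G B" and j: "j \<in> S"
  shows "\<bar>B j j\<bar> \<le> 1 / (1 - (real (card S) - 1) * \<mu>)"
    and "\<And>i. i \<in> S \<Longrightarrow> i \<noteq> j \<Longrightarrow> \<bar>B i j\<bar> \<le> \<mu> / (1 - (real (card S) - 1) * \<mu>)"
proof -
  have fin: "finite S" by simp
  let ?a = "(real (card S) - 1) * \<mu>"
  have eq: "\<forall>i\<in>S. (\<Sum>l\<in>S. G i l * B l j) = (if i = j then 1 else 0)"
    using B j by (simp add: inv_prop_def)
  have "(\<Sum>i\<in>S. \<bar>B i j\<bar>) \<le> (\<Sum>i\<in>S. \<bar>if i = j then 1 else 0::real\<bar>) + ?a * (\<Sum>i\<in>S. \<bar>B i j\<bar>)"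
    by (rule l1_bound[OF fin diag off eq])
  also have "(\<Sum>i\<in>S. \<bar>if i = j then 1 else 0::real\<bar>) = 1"
    using j fin by (simp add: if_distrib sum.delta cong: if_cong)
  finally have "(1 - ?a) * (\<Sum>i\<in>S. \<bar>B i j\<bar>) \<le> 1" by (simp add: algebra_simps)
  hence colsum: "(\<Sum>i\<in>S. \<bar>B i j\<bar>) \<le> 1 / (1 - ?a)" using a
    by (simp add: field_simps mult.commute)
  have "\<bar>B j j\<bar> \<le> (\<Sum>i\<in>S. \<bar>B i j\<bar>)"
    using member_le_sum[of j S "\<lambda>i. \<bar>B i j\<bar>"] j fin by auto
  thus "\<bar>B j j\<bar> \<le> 1 / (1 - ?a)" using colsum by linarith
  fix i assume i: "i \<in> S" and ij: "i \<noteq> j"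
  have "(\<Sum>l\<in>S. G i l * B l j) = G i i * B i j + (\<Sum>l\<in>S-{i}. G i l * B l j)"
    using fin i by (simp add: sum.remove)
  hence "B i j = - (\<Sum>l\<in>S-{i}. G i l * B l j)" using eq diag i ij by auto
  hence "\<bar>B i j\<bar> \<le> (\<Sum>l\<in>S-{i}. \<bar>G i l * B l j\<bar>)" by (simp add: sum_abs)
  also have "\<dots> \<le> (\<Sum>l\<in>S-{i}. \<mu> * \<bar>B l j\<bar>)"
    apply (rule sum_mono)
    using off i by (auto simp: abs_mult intro!: mult_right_mono)
  also have "\<dots> \<le> (\<Sum>l\<in>S. \<mu> * \<bar>B l j\<bar>)"
    by (rule sum_mono2) (use fin mu in auto)
  also have "\<dots> = \<mu> * (\<Sum>l\<in>S. \<bar>B l j\<bar>)" by (simp add: sum_distrib_left)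
  also have "\<dots> \<le> \<mu> * (1 / (1 - ?a))" by (rule mult_left_mono[OF colsum mu])
  finally show "\<bar>B i j\<bar> \<le> \<mu> / (1 - ?a)" by simp
qed


lemma E_fin:
  fixes J :: "'p::finite set pmf" and X Y f :: "'p set \<Rightarrow> real"
  shows "measure_pmf.expectation J f = (\<Sum>S\<in>UNIV. pmf J S * f S)"
  by (subst integral_measure_pmf_real[of UNIV]) (auto simp: mult.commute)

lemma E_mono:
  fixes J :: "'p::finite set pmf" and X Y f :: "'p set \<Rightarrow> real"
  assumes "\<And>S. S \<in> set_pmf J \<Longrightarrow> X S \<le> Y S"
  shows "measure_pmf.expectation J X \<le> measure_pmf.expectation J Y"
  unfolding E_fin
proof (rule sum_mono)
  fix S :: "'p set"
  show "pmf J S * X S \<le> pmf J S * Y S"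
  proof (cases "S \<in> set_pmf J")
    case True thus ?thesis using assms by (simp add: mult_left_mono)
  next
    case False hence "pmf J S = 0" by (simp add: set_pmf_iff)
      thus ?thesis by simp
  qed
qed

lemma E_abs:
  fixes J :: "'p::finite set pmf" and X Y f :: "'p set \<Rightarrow> real"
  assumes "\<And>S. S \<in> set_pmf J \<Longrightarrow> \<bar>X S\<bar> \<le> Y S"
  shows "\<bar>measure_pmf.expectation J X\<bar> \<le> measure_pmf.expectation J Y"
proof -
  have "\<bar>measure_pmf.expectation J X\<bar> \<le> (\<Sum>S\<in>UNIV. \<bar>pmf J S * X S\<bar>)"
    unfolding E_fin by (rule sum_abs)
  also have "\<dots> \<le> (\<Sum>S\<in>UNIV. pmf J S * Y S)"
  proof (rule sum_mono)
    fix S :: "'p set"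
    show "\<bar>pmf J S * X S\<bar> \<le> pmf J S * Y S"
    proof (cases "S \<in> set_pmf J")
      case True thus ?thesis using assms by (simp add: abs_mult mult_left_mono)
    next
      case False hence "pmf J S = 0" by (simp add: set_pmf_iff)
      thus ?thesis by simp
    qed
  qed
  finally show ?thesis unfolding E_fin .
qed

lemma E_add:
  fixes J :: "'p::finite set pmf" and X Y f :: "'p set \<Rightarrow> real"
  shows "measure_pmf.expectation J (\<lambda>S. X S + Y S) = measure_pmf.expectation J X + measure_pmf.expectation J Y"
  unfolding E_fin by (simp add: sum.distrib algebra_simps)

lemma E_cmult:
  fixes J :: "'p::finite set pmf" and X :: "'p set \<Rightarrow> real"
  shows "measure_pmf.expectation J (\<lambda>S. c * X S) = c * measure_pmf.expectation J X"
  unfolding E_fin by (simp add: sum_distrib_left algebra_simps)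

lemma prob_fin:
  fixes J :: "'p::finite set pmf"
  shows "measure_pmf.prob J A = (\<Sum>S\<in>UNIV. pmf J S * (if S \<in> A then 1 else 0))"
proof -
  have "measure_pmf.prob J A = sum (pmf J) A" by (simp add: measure_measure_pmf_finite)
  also have "\<dots> = (\<Sum>S\<in>UNIV. pmf J S * (if S \<in> A then 1 else 0))"
    by (simp add: if_distrib sum.If_cases)
  finally show ?thesis .
qed

lemma E_sum1:
  fixes J :: "'p::finite set pmf" and f :: "'p \<Rightarrow> real"
  shows "measure_pmf.expectation J (\<lambda>S. \<Sum>j\<in>S. f j) = (\<Sum>j\<in>UNIV. f j * measure_pmf.prob J {S. j \<in> S})"
proof -
  have "measure_pmf.expectation J (\<lambda>S. \<Sum>j\<in>S. f j) = (\<Sum>S\<in>UNIV. \<Sum>j\<in>UNIV. pmf J S * (if j \<in> S then f j else 0))"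
    unfolding E_fin by (simp add: sum_distrib_left if_distrib sum.If_cases Int_absorb1 cong: if_cong)
  also have "\<dots> = (\<Sum>j\<in>UNIV. \<Sum>S\<in>UNIV. pmf J S * (if j \<in> S then f j else 0))" by (rule sum.swap)
  also have "\<dots> = (\<Sum>j\<in>UNIV. f j * measure_pmf.prob J {S. j \<in> S})"
    unfolding prob_fin by (simp add: sum_distrib_left if_distrib algebra_simps cong: if_cong)
  finally show ?thesis .
qed


lemma E_sumA:
  fixes J :: "'p::finite set pmf" and F :: "'a \<Rightarrow> 'p set \<Rightarrow> real"
  assumes "finite A"
  shows "measure_pmf.expectation J (\<lambda>S. \<Sum>x\<in>A. F x S) = (\<Sum>x\<in>A. measure_pmf.expectation J (F x))"
  unfolding E_fin sum_distrib_left by (rule sum.swap)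

lemma E_ind:
  fixes J :: "'p::finite set pmf"
  shows "measure_pmf.expectation J (\<lambda>S. if P S then c else 0) = c * measure_pmf.prob J {S. P S}"
  unfolding E_fin prob_fin sum_distrib_left by (rule sum.cong) auto

lemma sum2_UNIV:
  fixes g :: "'p::finite \<Rightarrow> 'p \<Rightarrow> real"
  shows "(\<Sum>i\<in>S. \<Sum>l\<in>S-{i}. g i l) = (\<Sum>i\<in>UNIV. \<Sum>l\<in>UNIV-{i}. (if i \<in> S \<and> l \<in> S then g i l else 0))"
proof -
  have "(\<Sum>i\<in>UNIV. \<Sum>l\<in>UNIV-{i}. (if i \<in> S \<and> l \<in> S then g i l else 0))
      = (\<Sum>i\<in>UNIV. if i \<in> S then (\<Sum>l\<in>UNIV-{i}. (if l \<in> S then g i l else 0)) else 0)"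
    by (rule sum.cong) auto
  also have "\<dots> = (\<Sum>i\<in>S. (\<Sum>l\<in>UNIV-{i}. (if l \<in> S then g i l else 0)))"
    using sum.inter_restrict[of UNIV "\<lambda>i. \<Sum>l\<in>UNIV-{i}. (if l \<in> S then g i l else 0)" S] by simp
  also have "\<dots> = (\<Sum>i\<in>S. \<Sum>l\<in>S-{i}. g i l)"
  proof (rule sum.cong[OF refl])
    fix i
    have "(\<Sum>l\<in>UNIV-{i}. (if l \<in> S then g i l else 0)) = (\<Sum>l\<in>(UNIV-{i}) \<inter> S. g i l)"
      by (rule sum.inter_restrict[symmetric]) simp
    also have "(UNIV-{i}) \<inter> S = S - {i}" by blast
    finally show "(\<Sum>l\<in>UNIV-{i}. (if l \<in> S then g i l else 0)) = (\<Sum>l\<in>S-{i}. g i l)" .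
  qed
  finally show ?thesis by simp
qed

lemma E_sum2:
  fixes J :: "'p::finite set pmf" and g :: "'p \<Rightarrow> 'p \<Rightarrow> real"
  shows "measure_pmf.expectation J (\<lambda>S. \<Sum>i\<in>S. \<Sum>l\<in>S-{i}. g i l)
     = (\<Sum>i\<in>UNIV. \<Sum>l\<in>UNIV-{i}. g i l * measure_pmf.prob J {S. i \<in> S \<and> l \<in> S})"
  apply (subst sum2_UNIV)
  apply (subst E_sumA[OF finite_class.finite_UNIV])
  apply (rule sum.cong[OF refl])
  apply (subst E_sumA[OF finite_Diff[OF finite_class.finite_UNIV]])
  apply (rule sum.cong[OF refl])
  apply (rule E_ind)
  done


locale L14 =
  fixes D0 W :: "real^'p^'m" and v :: "real^'p" and t :: real and k :: nat
    and J :: "'p set pmf"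
  assumes unit_cols: "\<forall>j. norm (column j D0) = 1"
    and supp_card: "\<forall>S\<in>set_pmf J. card S = k"
    and marg1: "\<forall>j. measure_pmf.prob J {S. j \<in> S} = real k / real CARD('p)"
    and marg2: "\<forall>i j. i \<noteq> j \<longrightarrow> measure_pmf.prob J {S. i \<in> S \<and> j \<in> S}
                   = real k * (real k - 1) / (real CARD('p) * (real CARD('p) - 1))"
    and t_nonneg: "0 \<le> t"
    and coh: "real k * mu D0 t < 1 / 2"
    and W_orth: "\<forall>j. inner (column j W) (column j D0) = 0"
    and W_unit: "\<forall>j. norm (column j W) = 1"
    and v_unit: "norm v = 1"
    and kpos: "1 \<le> k"
begin

abbreviation "d j \<equiv> column j D0"
abbreviation "w j \<equiv> column j W"
abbreviation "DT \<equiv> Dt D0 W v t"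
abbreviation "dt j \<equiv> column j DT"
abbreviation "e j \<equiv> dt j - d j"
abbreviation "cc j \<equiv> cos (v$j * t)"
abbreviation "ss j \<equiv> sin (v$j * t)"
abbreviation "\<mu> \<equiv> mu D0 t"
abbreviation "a \<equiv> specnorm D0"

lemma dt_eq: "dt j = cc j *\<^sub>R d j + ss j *\<^sub>R w j"
  by (simp add: column_def Dt_def vec_eq_iff)

lemma dd: "inner (d j) (d j) = 1"
  using unit_cols by (metis power2_norm_eq_inner power_one)
lemma ww: "inner (w j) (w j) = 1"
  using W_unit by (metis power2_norm_eq_inner power_one)
lemma wd: "inner (w j) (d j) = 0" using W_orth by simp
lemma dw: "inner (d j) (w j) = 0" using W_orth by (simp add: inner_commute)

lemma abs_dw: "\<bar>inner (d i) (w j)\<bar> \<le> 1"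
  using Cauchy_Schwarz_ineq2[of "d i" "w j"] unit_cols W_unit by simp
lemma abs_wd: "\<bar>inner (w i) (d j)\<bar> \<le> 1"
  using Cauchy_Schwarz_ineq2[of "w i" "d j"] unit_cols W_unit by simp
lemma abs_ww: "\<bar>inner (w i) (w j)\<bar> \<le> 1"
  using Cauchy_Schwarz_ineq2[of "w i" "w j"] W_unit by simp

lemma dtdt: "inner (dt j) (dt j) = 1"
proof -
  have "inner (dt j) (dt j) = (cc j)^2 * inner (d j) (d j) + 2 * cc j * ss j * inner (d j) (w j) + (ss j)^2 * inner (w j) (w j)"
    unfolding dt_eq by (simp add: inner_add_left inner_add_right inner_commute power2_eq_square algebra_simps)
  also have "\<dots> = 1" using dd ww dw by (simp add: sin_cos_squared_add2)
  finally show ?thesis .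
qed

lemma dtd: "inner (dt j) (d j) = cc j"
  unfolding dt_eq by (simp add: inner_add_left dd wd)

lemma ddt: "inner (d j) (dt j) = cc j" using dtd by (simp add: inner_commute)

lemma dte: "inner (dt j) (e j) = 1 - cc j"
  by (simp add: inner_diff_right dtdt dtd)

lemma ee: "inner (e j) (e j) = 2 - 2 * cc j"
  by (simp add: inner_diff_left inner_diff_right dtdt dtd ddt dd)

lemma dte_ee: "inner (dt j) (e j) = inner (e j) (e j) / 2"
  by (simp add: dte ee)

lemma ee_le: "inner (e j) (e j) \<le> (v$j)^2 * t^2"
  using cos_lower[of "v$j * t"] by (simp add: ee power_mult_distrib)

lemma ee_ge: "inner (e j) (e j) \<ge> (v$j)^2 * t^2 - (v$j)^4 * t^4 / 12"
  using cos_upper[of "v$j * t"] by (simp add: ee power_mult_distrib)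

lemma sum_v2: "(\<Sum>j\<in>UNIV. (v$j)^2) = 1"
proof -
  have "inner v v = 1" using v_unit by (metis power2_norm_eq_inner power_one)
  thus ?thesis by (simp add: inner_vec_def power2_eq_square)
qed

lemma abs_v: "\<bar>v$j\<bar> \<le> 1"
  using component_le_norm_cart[of v j] v_unit by simp

lemma sum_v4: "(\<Sum>j\<in>UNIV. (v$j)^4) \<le> 1"
proof -
  have "(\<Sum>j\<in>UNIV. (v$j)^4) \<le> (\<Sum>j\<in>UNIV. (v$j)^2)"
  proof (rule sum_mono)
    fix j
    have "\<bar>v$j\<bar>^2 \<le> 1" by (rule power_le_one) (simp_all add: abs_v)
    hence "(v$j)^2 \<le> 1" by simp
    hence "(v$j)^2 * (v$j)^2 \<le> 1 * (v$j)^2" by (rule mult_right_mono) simp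
    thus "(v$j)^4 \<le> (v$j)^2" by (simp add: power4_eq_xxxx power2_eq_square)
  qed
  thus ?thesis using sum_v2 by simp
qed

definition "E2 = (\<Sum>j\<in>UNIV. inner (e j) (e j))"

lemma E2_le: "E2 \<le> t^2"
proof -
  have "E2 \<le> (\<Sum>j\<in>UNIV. (v$j)^2 * t^2)" unfolding E2_def by (rule sum_mono) (rule ee_le)
  also have "\<dots> = t^2" using sum_v2 by (simp add: sum_distrib_right[symmetric])
  finally show ?thesis .
qed

lemma E2_ge: "E2 \<ge> t^2 - t^4/12"
proof -
  have "E2 \<ge> (\<Sum>j\<in>UNIV. (v$j)^2 * t^2 - (v$j)^4 * t^4 / 12)" unfolding E2_def by (rule sum_mono) (rule ee_ge)
  moreover have "(\<Sum>j\<in>UNIV. (v$j)^2 * t^2 - (v$j)^4 * t^4 / 12) = t^2 - (\<Sum>j\<in>UNIV. (v$j)^4) * t^4/12"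
    using sum_v2 by (simp add: sum_subtractf sum_distrib_right[symmetric] sum_divide_distrib[symmetric])
  moreover have "(\<Sum>j\<in>UNIV. (v$j)^4) * t^4/12 \<le> t^4/12"
  proof -
    have "(\<Sum>j\<in>UNIV. (v$j)^4) * t^4 \<le> 1 * t^4" by (rule mult_right_mono[OF sum_v4]) simp
    thus ?thesis by simp
  qed
  ultimately show ?thesis by linarith
qed

lemma ee_nonneg: "0 \<le> inner (e j) (e j)" by simp

lemma E2_nonneg: "0 \<le> E2" unfolding E2_def by (rule sum_nonneg) simp

lemma norm_e: "norm (e j) = sqrt (inner (e j) (e j))" by (simp add: norm_eq_sqrt_inner)

lemma k_le_p: "real k \<le> real CARD('p)"
proof -
  obtain S where "S \<in> set_pmf J" using set_pmf_not_empty[of J] by blast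
  hence "card S = k" using supp_card by auto
  moreover have "card S \<le> CARD('p)" by (rule card_mono) auto
  ultimately show ?thesis by simp
qed

lemma p_pos: "0 < real CARD('p)" by simp

lemma mu0_fin: "finite {\<bar>inner (column i D0) (column j D0)\<bar> | i j. i \<noteq> j}"
  by (rule finite_subset[of _ "(\<lambda>(i,j). \<bar>inner (column i D0) (column j D0)\<bar>) ` UNIV"]) auto

lemma mu0_nonneg: "0 \<le> mu0 D0"
  unfolding mu0_def using mu0_fin by (simp add: Max_ge_iff)

lemma mu0_ge: "i \<noteq> j \<Longrightarrow> \<bar>inner (d i) (d j)\<bar> \<le> mu0 D0"
  unfolding mu0_def using mu0_fin by (intro Max_ge) auto

lemma mu_eq: "\<mu> = mu0 D0 + 3 * t" by (simp add: mu_def)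

lemma kmu_ge: "3 * t \<le> real k * \<mu>"
proof -
  have "3 * t \<le> \<mu>" using mu_eq mu0_nonneg by simp
  also have "\<mu> \<le> real k * \<mu>" using kpos mu_eq mu0_nonneg t_nonneg by (simp add: mult_le_cancel_right1)
  finally show ?thesis .
qed

lemma t_le: "t \<le> 1/6" using kmu_ge coh by simp
lemma mu_nonneg: "0 \<le> \<mu>" using mu_eq mu0_nonneg t_nonneg by simp
lemma mu0_le_mu: "mu0 D0 \<le> \<mu>" using mu_eq t_nonneg by simp

lemma abs_ss: "\<bar>ss j\<bar> \<le> t"
proof -
  have "\<bar>ss j\<bar> \<le> \<bar>v$j * t\<bar>" by (rule abs_sin_x_le_abs_x)
  also have "\<dots> = \<bar>v$j\<bar> * t" using t_nonneg by (simp add: abs_mult)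
  also have "\<dots> \<le> 1 * t" using abs_v t_nonneg by (intro mult_right_mono) auto
  finally show ?thesis by simp
qed

lemma coh_t: assumes "i \<noteq> j" shows "\<bar>inner (dt i) (dt j)\<bar> \<le> \<mu>"
proof -
  have eq: "inner (dt i) (dt j) = cc i * cc j * inner (d i) (d j) + cc i * ss j * inner (d i) (w j)
       + ss i * cc j * inner (w i) (d j) + ss i * ss j * inner (w i) (w j)"
    unfolding dt_eq by (simp add: inner_add_left inner_add_right algebra_simps)
  have b1: "\<bar>cc i * cc j * inner (d i) (d j)\<bar> \<le> mu0 D0"
  proof -
    have "\<bar>cc i * cc j * inner (d i) (d j)\<bar> = \<bar>cc i\<bar> * \<bar>cc j\<bar> * \<bar>inner (d i) (d j)\<bar>" by (simp add: abs_mult)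
    also have "\<dots> \<le> 1 * 1 * mu0 D0"
      using mu0_ge[OF assms] by (intro mult_mono) auto
    finally show ?thesis by simp
  qed
  have b2: "\<bar>cc i * ss j * inner (d i) (w j)\<bar> \<le> t"
  proof -
    have "\<bar>cc i * ss j * inner (d i) (w j)\<bar> = \<bar>cc i\<bar> * \<bar>ss j\<bar> * \<bar>inner (d i) (w j)\<bar>" by (simp add: abs_mult)
    also have "\<dots> \<le> 1 * t * 1"
      using abs_ss abs_dw t_nonneg by (intro mult_mono) auto
    finally show ?thesis by simp
  qed
  have b3: "\<bar>ss i * cc j * inner (w i) (d j)\<bar> \<le> t"
  proof -
    have "\<bar>ss i * cc j * inner (w i) (d j)\<bar> = \<bar>ss i\<bar> * \<bar>cc j\<bar> * \<bar>inner (w i) (d j)\<bar>" by (simp add: abs_mult)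
    also have "\<dots> \<le> t * 1 * 1"
      using abs_ss abs_wd t_nonneg by (intro mult_mono) auto
    finally show ?thesis by simp
  qed
  have b4: "\<bar>ss i * ss j * inner (w i) (w j)\<bar> \<le> t"
  proof -
    have "\<bar>ss i * ss j * inner (w i) (w j)\<bar> = \<bar>ss i\<bar> * \<bar>ss j\<bar> * \<bar>inner (w i) (w j)\<bar>" by (simp add: abs_mult)
    also have "\<dots> \<le> t * 1 * 1"
      using abs_ss abs_ww t_nonneg t_le by (intro mult_mono) (auto intro: order_trans[OF abs_ss])
    finally show ?thesis by simp
  qed
  show ?thesis unfolding eq mu_eq using b1 b2 b3 b4 by linarith
qed

lemma dt_inj: "inj (\<lambda>j. dt j)"
proof (rule injI)
  fix i j assume h: "dt i = dt j"
  show "i = j"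
  proof (rule ccontr)
    assume "i \<noteq> j"
    hence "\<bar>inner (dt i) (dt j)\<bar> \<le> \<mu>" by (rule coh_t)
    moreover have "inner (dt i) (dt j) = 1" using h dtdt by simp
    moreover have "\<mu> < 1/2" using coh kpos mu_nonneg
      by (smt (verit) mult_le_cancel_right1 of_nat_1 of_nat_mono)
    ultimately show False by simp
  qed
qed

end

lemma sum_abs_sqrt:
  fixes f :: "'a \<Rightarrow> real"
  assumes "finite A"
  shows "(\<Sum>l\<in>A. \<bar>f l\<bar>) \<le> sqrt (real (card A)) * sqrt (\<Sum>l\<in>A. (f l)^2)"
proof -
  have "(\<Sum>l\<in>A. \<bar>f l\<bar> * 1)^2 \<le> (\<Sum>l\<in>A. \<bar>f l\<bar>^2) * (\<Sum>l\<in>A. 1^2)"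
    by (rule Cauchy_Schwarz_ineq_sum)
  hence "(\<Sum>l\<in>A. \<bar>f l\<bar>)^2 \<le> real (card A) * (\<Sum>l\<in>A. (f l)^2)" by (simp add: mult.commute)
  hence "sqrt ((\<Sum>l\<in>A. \<bar>f l\<bar>)^2) \<le> sqrt (real (card A) * (\<Sum>l\<in>A. (f l)^2))"
    by (rule real_sqrt_le_mono)
  moreover have "0 \<le> (\<Sum>l\<in>A. \<bar>f l\<bar>)" by (simp add: sum_nonneg)
  ultimately show ?thesis by (simp add: real_sqrt_mult)
qed

context L14 begin

abbreviation "Q2 \<equiv> (Qt D0 k t)^2"

lemma kmu_lt: "real k * \<mu> < 1/2" using coh by simp

lemma Q2_eq: "Q2 = 1 / (1 - real k * \<mu>)"
proof -
  have "0 < 1 - real k * \<mu>" using kmu_lt by simp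
  thus ?thesis by (simp add: Qt_def power_divide)
qed

lemma Q2_ge1: "1 \<le> Q2"
  unfolding Q2_eq using kmu_lt mu_nonneg by (simp add: field_simps)

lemma Q2_le2: "Q2 \<le> 2"
  unfolding Q2_eq using kmu_lt mu_nonneg by (simp add: field_simps)

lemma rho_le: "1 / (1 - (real k - 1) * \<mu>) \<le> Q2"
proof -
  have p1: "0 < 1 - real k * \<mu>" using kmu_lt by simp
  have le: "1 - real k * \<mu> \<le> 1 - (real k - 1) * \<mu>" using mu_nonneg by (simp add: algebra_simps)
  have p2: "0 < 1 - (real k - 1) * \<mu>" using p1 le by linarith
  show ?thesis unfolding Q2_eq by (rule divide_left_mono[OF le]) (use p1 p2 in auto)
qed

lemma Theta_props:
  fixes D :: "real^'p^'m"
  assumes S: "S \<in> set_pmf J" and u: "\<And>j. inner (column j D) (column j D) = 1"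
    and o: "\<And>i j. i \<noteq> j \<Longrightarrow> \<bar>inner (column i D) (column j D)\<bar> \<le> \<mu>"
  shows "inv_prop S (gram D) (Theta D S)"
    and "j \<in> S \<Longrightarrow> \<bar>Theta D S j j\<bar> \<le> Q2"
    and "i \<in> S \<Longrightarrow> j \<in> S \<Longrightarrow> i \<noteq> j \<Longrightarrow> \<bar>Theta D S i j\<bar> \<le> \<mu> * Q2"
proof -
  have cS: "card S = k" using S supp_card by auto
  have diag: "\<forall>i\<in>S. gram D i i = 1" using u by (simp add: gram_def)
  have off: "\<forall>i\<in>S. \<forall>l\<in>S. i \<noteq> l \<longrightarrow> \<bar>gram D i l\<bar> \<le> \<mu>" using o by (simp add: gram_def)
  have am: "(real (card S) - 1) * \<mu> < 1" using cS kmu_lt mu_nonneg by (simp add: algebra_simps)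
  show ip: "inv_prop S (gram D) (Theta D S)" unfolding Theta_def by (rule inv_on_prop[OF diag off am])
  show "j \<in> S \<Longrightarrow> \<bar>Theta D S j j\<bar> \<le> Q2"
    using inv_bounds(1)[OF diag off am mu_nonneg ip] rho_le cS by force
  assume "i \<in> S" "j \<in> S" "i \<noteq> j"
  hence "\<bar>Theta D S i j\<bar> \<le> \<mu> / (1 - (real (card S) - 1) * \<mu>)"
    using inv_bounds(2)[OF diag off am mu_nonneg ip] by blast
  also have "\<dots> = \<mu> * (1 / (1 - (real k - 1) * \<mu>))" using cS by simp
  also have "\<dots> \<le> \<mu> * Q2" using rho_le mu_nonneg by (rule mult_left_mono)
  finally show "\<bar>Theta D S i j\<bar> \<le> \<mu> * Q2" .
qed

lemma o0: "i \<noteq> j \<Longrightarrow> \<bar>inner (d i) (d j)\<bar> \<le> \<mu>"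
  using mu0_ge mu0_le_mu by (meson order_trans)

lemma Th0: "S \<in> set_pmf J \<Longrightarrow> inv_prop S (gram D0) (Theta D0 S)"
  "S \<in> set_pmf J \<Longrightarrow> j \<in> S \<Longrightarrow> \<bar>Theta D0 S j j\<bar> \<le> Q2"
  "S \<in> set_pmf J \<Longrightarrow> i \<in> S \<Longrightarrow> j \<in> S \<Longrightarrow> i \<noteq> j \<Longrightarrow> \<bar>Theta D0 S i j\<bar> \<le> \<mu> * Q2"
  using Theta_props[OF _ dd o0] by auto

lemma Tht: "S \<in> set_pmf J \<Longrightarrow> inv_prop S (gram DT) (Theta DT S)"
  "S \<in> set_pmf J \<Longrightarrow> j \<in> S \<Longrightarrow> \<bar>Theta DT S j j\<bar> \<le> Q2"
  "S \<in> set_pmf J \<Longrightarrow> i \<in> S \<Longrightarrow> j \<in> S \<Longrightarrow> i \<noteq> j \<Longrightarrow> \<bar>Theta DT S i j\<bar> \<le> \<mu> * Q2"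
  using Theta_props[OF _ dtdt coh_t] by auto

lemma sn_bound: "norm (D0 *v x) \<le> a * norm x"
  unfolding specnorm_def by (rule onorm[OF matrix_vector_mul_bounded_linear])

lemma a_ge1: "1 \<le> a"
proof -
  have "norm (D0 *v axis (undefined::'p) 1) \<le> a * norm (axis (undefined::'p) 1 :: real^'p)" by (rule sn_bound)
  thus ?thesis using unit_cols by (simp add: matrix_vector_mult_basis norm_axis_1)
qed

lemma inner_Dv: "inner (D0 *v y) u = (\<Sum>l\<in>UNIV. y$l * inner (d l) u)"
proof -
  have "inner (D0 *v y) u = (\<Sum>i\<in>UNIV. \<Sum>l\<in>UNIV. y$l * (D0$i$l * u$i))"
    by (simp add: inner_vec_def matrix_vector_mult_def sum_distrib_right sum_distrib_left mult_ac)
  also have "\<dots> = (\<Sum>l\<in>UNIV. \<Sum>i\<in>UNIV. y$l * (D0$i$l * u$i))" by (rule sum.swap)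
  also have "\<dots> = (\<Sum>l\<in>UNIV. y$l * inner (d l) u)"
    by (simp add: inner_vec_def column_def sum_distrib_left)
  finally show ?thesis .
qed

lemma norm_vec_sq: "(norm (x::real^'p))^2 = (\<Sum>l\<in>UNIV. (x$l)^2)"
  unfolding power2_norm_eq_inner by (simp add: inner_vec_def power2_eq_square)

lemma DTu: "norm (\<chi> l. inner (d l) u) \<le> a * norm u"
proof -
  define y where "y = (\<chi> l. inner (d l) u)"
  have "(norm y)^2 = inner (D0 *v y) u"
    unfolding inner_Dv norm_vec_sq by (simp add: y_def power2_eq_square)
  also have "\<dots> \<le> norm (D0 *v y) * norm u" by (rule real_inner_class.Cauchy_Schwarz_ineq2[THEN order_trans[OF abs_ge_self]])
  also have "\<dots> \<le> a * norm y * norm u" using sn_bound by (simp add: mult_right_mono)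
  finally have h: "norm y * norm y \<le> norm y * (a * norm u)" by (simp add: power2_eq_square mult_ac)
  show ?thesis
  proof (cases "norm y = 0")
    case True thus ?thesis using a_ge1 by (simp add: y_def)
  next
    case False hence "0 < norm y" by simp
    with h show ?thesis unfolding y_def[symmetric] by simp
  qed
qed

lemma ETu: "norm (\<chi> l. inner (e l) u) \<le> t * norm u"
proof -
  have "(norm (\<chi> l. inner (e l) u))^2 = (\<Sum>l\<in>UNIV. (inner (e l) u)^2)" by (simp add: norm_vec_sq)
  also have "\<dots> \<le> (\<Sum>l\<in>UNIV. inner (e l) (e l) * inner u u)"
    by (rule sum_mono) (rule Cauchy_Schwarz_ineq)
  also have "\<dots> = E2 * (norm u)^2" by (simp add: E2_def sum_distrib_right power2_norm_eq_inner)
  also have "\<dots> \<le> t^2 * (norm u)^2" using E2_le by (simp add: mult_right_mono)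
  also have "\<dots> = (t * norm u)^2" by (simp add: power_mult_distrib)
  finally show ?thesis using t_nonneg by (simp add: power2_le_iff_abs_le)
qed

lemma DtTu: "norm (\<chi> l. inner (dt l) u) \<le> (a + t) * norm u"
proof -
  have "(\<chi> l. inner (dt l) u) = (\<chi> l. inner (d l) u) + (\<chi> l. inner (e l) u)"
    by (simp add: vec_eq_iff inner_diff_left)
  hence "norm (\<chi> l. inner (dt l) u) \<le> norm (\<chi> l. inner (d l) u) + norm (\<chi> l. inner (e l) u)"
    by (simp add: norm_triangle_ineq)
  thus ?thesis using DTu[of u] ETu[of u] by (simp add: algebra_simps)
qed

lemma sum_dtu_sq: "(\<Sum>l\<in>UNIV. (inner (dt l) u)^2) \<le> (a + t)^2 * inner u u"
proof -
  have "(\<Sum>l\<in>UNIV. (inner (dt l) u)^2) = (norm (\<chi> l. inner (dt l) u))^2" by (simp add: norm_vec_sq)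
  also have "\<dots> \<le> ((a + t) * norm u)^2" using DtTu by (simp add: power_mono)
  also have "\<dots> = (a + t)^2 * inner u u" by (simp add: power_mult_distrib power2_norm_eq_inner)
  finally show ?thesis .
qed

lemma sum_abs_du: "(\<Sum>l\<in>UNIV. \<bar>inner (d l) u\<bar>) \<le> sqrt (real CARD('p)) * (a * norm u)"
proof -
  have "(\<Sum>l\<in>UNIV. \<bar>inner (d l) u\<bar>) \<le> sqrt (real CARD('p)) * sqrt (\<Sum>l\<in>UNIV. (inner (d l) u)^2)"
    using sum_abs_sqrt[of UNIV "\<lambda>l. inner (d l) u"] by simp
  also have "sqrt (\<Sum>l\<in>UNIV. (inner (d l) u)^2) = sqrt ((norm (\<chi> l. inner (d l) u))^2)"
    by (simp add: norm_vec_sq)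
  also have "\<dots> = norm (\<chi> l. inner (d l) u)" by simp
  also have "sqrt (real CARD('p)) * norm (\<chi> l. inner (d l) u) \<le> sqrt (real CARD('p)) * (a * norm u)"
    by (rule mult_left_mono[OF DTu]) simp
  finally show ?thesis .
qed

lemma sum_norm_e: "(\<Sum>j\<in>UNIV. norm (e j)) \<le> sqrt (real CARD('p)) * t"
proof -
  have "(\<Sum>j\<in>UNIV. norm (e j)) = (\<Sum>j\<in>UNIV. \<bar>norm (e j)\<bar>)" by simp
  also have "\<dots> \<le> sqrt (real CARD('p)) * sqrt (\<Sum>j\<in>UNIV. (norm (e j))^2)"
    using sum_abs_sqrt[of UNIV "\<lambda>j. norm (e j)"] by simp
  also have "(\<Sum>j\<in>UNIV. (norm (e j))^2) = E2" by (simp add: E2_def power2_norm_eq_inner)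
  also have "sqrt E2 \<le> t" using real_sqrt_le_mono[OF E2_le] t_nonneg by simp
  finally show ?thesis by (simp add: mult_left_mono)
qed

lemma SB1: "(\<Sum>j\<in>UNIV. \<Sum>l\<in>UNIV. \<bar>inner (d l) (e j)\<bar>) \<le> real CARD('p) * a * t"
proof -
  have "(\<Sum>j\<in>UNIV. \<Sum>l\<in>UNIV. \<bar>inner (d l) (e j)\<bar>) \<le> (\<Sum>j\<in>UNIV. sqrt (real CARD('p)) * (a * norm (e j)))"
    by (rule sum_mono) (rule sum_abs_du)
  also have "\<dots> = sqrt (real CARD('p)) * a * (\<Sum>j\<in>UNIV. norm (e j))" by (simp add: sum_distrib_left mult_ac)
  also have "\<dots> \<le> sqrt (real CARD('p)) * a * (sqrt (real CARD('p)) * t)"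
    using sum_norm_e a_ge1 by (intro mult_left_mono) auto
  also have "\<dots> = real CARD('p) * a * t" by (simp add: mult_ac)
  finally show ?thesis .
qed

lemma SB2: "(\<Sum>j\<in>UNIV. \<Sum>l\<in>UNIV. \<bar>inner (e l) (e j)\<bar>) \<le> real CARD('p) * t^2"
proof -
  have "(\<Sum>j\<in>UNIV. \<Sum>l\<in>UNIV. \<bar>inner (e l) (e j)\<bar>) \<le> (\<Sum>j\<in>UNIV. \<Sum>l\<in>UNIV. norm (e l) * norm (e j))"
    by (intro sum_mono) (rule Cauchy_Schwarz_ineq2)
  also have "\<dots> = (\<Sum>j\<in>UNIV. norm (e j))^2" by (simp add: power2_eq_square sum_product mult_ac)
  also have "\<dots> \<le> (sqrt (real CARD('p)) * t)^2" using sum_norm_e by (intro power_mono) (auto intro: sum_nonneg)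
  also have "\<dots> = real CARD('p) * t^2" by (simp add: power_mult_distrib)
  finally show ?thesis .
qed

end

lemma trip_swap:
  fixes G A B :: "'a \<Rightarrow> 'a \<Rightarrow> real"
  shows "(\<Sum>j\<in>S. \<Sum>l\<in>S. G j l * (\<Sum>i\<in>S. A j i * B l i)) = (\<Sum>j\<in>S. \<Sum>i\<in>S. A j i * (\<Sum>l\<in>S. G j l * B l i))"
proof (rule sum.cong[OF refl])
  fix j
  have "(\<Sum>l\<in>S. G j l * (\<Sum>i\<in>S. A j i * B l i)) = (\<Sum>l\<in>S. \<Sum>i\<in>S. A j i * (G j l * B l i))"
    by (simp add: sum_distrib_left mult_ac)
  also have "\<dots> = (\<Sum>i\<in>S. \<Sum>l\<in>S. A j i * (G j l * B l i))" by (rule sum.swap)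
  also have "\<dots> = (\<Sum>i\<in>S. A j i * (\<Sum>l\<in>S. G j l * B l i))" by (simp add: sum_distrib_left)
  finally show "(\<Sum>l\<in>S. G j l * (\<Sum>i\<in>S. A j i * B l i)) = (\<Sum>i\<in>S. A j i * (\<Sum>l\<in>S. G j l * B l i))" .
qed

lemma sum_delta2:
  fixes A :: "'a \<Rightarrow> 'a \<Rightarrow> real"
  assumes "finite S"
  shows "(\<Sum>j\<in>S. \<Sum>i\<in>S. A j i * (if j = i then 1 else 0)) = (\<Sum>j\<in>S. A j j)"
  using assms by (simp add: if_distrib cong: if_cong)

definition P2f :: "nat \<Rightarrow> nat \<Rightarrow> real" where
  "P2f k n = real k * (real k - 1) / (real n * (real n - 1))"

context L14 begin


lemma P2f_nonneg: "0 \<le> P2f k CARD('p)"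
  using kpos by (simp add: P2f_def mult_nonneg_nonneg)

lemma P2f_le: "P2f k CARD('p) \<le> (real k / real CARD('p)) * (real k / real CARD('p))"
proof (cases "CARD('p) = 1")
  case True thus ?thesis by (simp add: P2f_def)
next
  case False
  have "0 < CARD('p)" by simp
  with False have "2 \<le> CARD('p)" by linarith
  hence p2: "2 \<le> real CARD('p)" by simp
  have kp: "real k \<le> real CARD('p)" by (rule k_le_p)
  have "(real k - 1) / (real CARD('p) - 1) \<le> real k / real CARD('p)"
    using p2 kp by (simp add: field_simps)
  hence "real k * ((real k - 1) / (real CARD('p) - 1)) \<le> real k * (real k / real CARD('p))"
    by (rule mult_left_mono) simp
  moreover have "P2f k CARD('p) = (real k / real CARD('p)) * ((real k - 1) / (real CARD('p) - 1))"
    by (simp add: P2f_def)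
  moreover have "(real k / real CARD('p)) * ((real k - 1) / (real CARD('p) - 1)) \<le> (real k / real CARD('p)) * (real k / real CARD('p))"
    using \<open>(real k - 1) / (real CARD('p) - 1) \<le> real k / real CARD('p)\<close> by (rule mult_left_mono) simp
  ultimately show ?thesis by simp
qed

lemma E1: "measure_pmf.expectation J (\<lambda>S. \<Sum>j\<in>S. f j) = (real k / real CARD('p)) * (\<Sum>j\<in>UNIV. f j)"
  unfolding E_sum1 using marg1 by (simp add: sum_distrib_left sum_divide_distrib mult_ac)

lemma E2s: "measure_pmf.expectation J (\<lambda>S. \<Sum>i\<in>S. \<Sum>l\<in>S-{i}. g i l) = P2f k CARD('p) * (\<Sum>i\<in>UNIV. \<Sum>l\<in>UNIV-{i}. g i l)"
proof -
  have "(\<Sum>i\<in>UNIV. \<Sum>l\<in>UNIV-{i}. g i l * measure_pmf.prob J {S. i \<in> S \<and> l \<in> S})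
      = (\<Sum>i\<in>UNIV. \<Sum>l\<in>UNIV-{i}. g i l * P2f k CARD('p))"
    by (intro sum.cong refl) (use marg2 in \<open>auto simp: P2f_def\<close>)
  also have "\<dots> = P2f k CARD('p) * (\<Sum>i\<in>UNIV. \<Sum>l\<in>UNIV-{i}. g i l)"
    by (simp add: sum_distrib_right sum_distrib_left mult.commute)
  finally show ?thesis unfolding E_sum2 .
qed

lemma E2s_le:
  assumes "\<And>i l. 0 \<le> g i l"
  shows "measure_pmf.expectation J (\<lambda>S. \<Sum>i\<in>S. \<Sum>l\<in>S-{i}. g i l)
          \<le> (real k / real CARD('p)) * (real k / real CARD('p)) * (\<Sum>i\<in>UNIV. \<Sum>l\<in>UNIV. g i l)"
proof -
  have s: "(\<Sum>i\<in>UNIV. \<Sum>l\<in>UNIV-{i}. g i l) \<le> (\<Sum>i\<in>UNIV. \<Sum>l\<in>UNIV. g i l)"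
    by (intro sum_mono sum_mono2) (auto simp: assms)
  have nn: "0 \<le> (\<Sum>i\<in>UNIV. \<Sum>l\<in>UNIV-{i}. g i l)" by (intro sum_nonneg) (simp add: assms)
  show ?thesis unfolding E2s using P2f_le P2f_nonneg s nn
    by (meson mult_mono order_trans zero_le_mult_iff sum_nonneg assms)
qed

lemma Delta_eq: "inner (dt j) (dt l) - inner (d j) (d l) = inner (d j) (e l) + inner (e j) (d l) + inner (e j) (e l)"
  by (simp add: inner_diff_left inner_diff_right algebra_simps)

lemma Delta_abs: "\<bar>inner (dt j) (dt l) - inner (d j) (d l)\<bar> \<le> \<bar>inner (d j) (e l)\<bar> + \<bar>inner (d l) (e j)\<bar> + \<bar>inner (e l) (e j)\<bar>"
proof -
  have h: "inner (dt j) (dt l) - inner (d j) (d l) = inner (d j) (e l) + inner (d l) (e j) + inner (e l) (e j)"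
    using Delta_eq[of j l] by (simp add: inner_commute)
  show ?thesis unfolding h by (rule order_trans[OF abs_triangle_ineq add_right_mono[OF abs_triangle_ineq]])
qed

lemma SB_Delta: "(\<Sum>j\<in>UNIV. \<Sum>l\<in>UNIV. \<bar>inner (dt j) (dt l) - inner (d j) (d l)\<bar>)
   \<le> real CARD('p) * t * (2 * a + t)"
proof -
  have "(\<Sum>j\<in>UNIV. \<Sum>l\<in>UNIV. \<bar>inner (dt j) (dt l) - inner (d j) (d l)\<bar>)
     \<le> (\<Sum>j\<in>UNIV. \<Sum>l\<in>UNIV. \<bar>inner (d j) (e l)\<bar> + \<bar>inner (d l) (e j)\<bar> + \<bar>inner (e l) (e j)\<bar>)"
    by (intro sum_mono) (rule Delta_abs)
  also have "\<dots> = (\<Sum>j\<in>UNIV. \<Sum>l\<in>UNIV. \<bar>inner (d j) (e l)\<bar>) + (\<Sum>j\<in>UNIV. \<Sum>l\<in>UNIV. \<bar>inner (d l) (e j)\<bar>)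
      + (\<Sum>j\<in>UNIV. \<Sum>l\<in>UNIV. \<bar>inner (e l) (e j)\<bar>)" by (simp add: sum.distrib)
  also have "(\<Sum>j\<in>UNIV. \<Sum>l\<in>UNIV. \<bar>inner (d j) (e l)\<bar>) = (\<Sum>j\<in>UNIV. \<Sum>l\<in>UNIV. \<bar>inner (d l) (e j)\<bar>)"
    by (rule sum.swap)
  finally show ?thesis using SB1 SB2 by (simp add: algebra_simps power2_eq_square)
qed

lemma trace_diff:
  assumes S: "S \<in> set_pmf J"
  shows "(\<Sum>j\<in>S. Theta D0 S j j - Theta DT S j j)
    = (\<Sum>j\<in>S. \<Sum>l\<in>S. (inner (dt j) (dt l) - inner (d j) (d l)) * (\<Sum>i\<in>S. Theta D0 S j i * Theta DT S l i))"
proof -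
  have fin: "finite S" by simp
  have i0: "inv_prop S (gram D0) (Theta D0 S)" and it: "inv_prop S (gram DT) (Theta DT S)"
    using Th0(1)[OF S] Tht(1)[OF S] .
  have A1: "(\<Sum>j\<in>S. \<Sum>l\<in>S. gram DT j l * (\<Sum>i\<in>S. Theta D0 S j i * Theta DT S l i)) = (\<Sum>j\<in>S. Theta D0 S j j)"
  proof -
    have "(\<Sum>j\<in>S. \<Sum>l\<in>S. gram DT j l * (\<Sum>i\<in>S. Theta D0 S j i * Theta DT S l i))
        = (\<Sum>j\<in>S. \<Sum>i\<in>S. Theta D0 S j i * (\<Sum>l\<in>S. gram DT j l * Theta DT S l i))" by (rule trip_swap)
    also have "\<dots> = (\<Sum>j\<in>S. \<Sum>i\<in>S. Theta D0 S j i * (if j = i then 1 else 0))"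
      using it by (intro sum.cong refl) (simp add: inv_prop_def)
    also have "\<dots> = (\<Sum>j\<in>S. Theta D0 S j j)" by (rule sum_delta2[OF fin])
    finally show ?thesis .
  qed
  have A2: "(\<Sum>j\<in>S. \<Sum>l\<in>S. gram D0 j l * (\<Sum>i\<in>S. Theta D0 S j i * Theta DT S l i)) = (\<Sum>j\<in>S. Theta DT S j j)"
  proof -
    have "(\<Sum>j\<in>S. \<Sum>l\<in>S. gram D0 j l * (\<Sum>i\<in>S. Theta D0 S j i * Theta DT S l i))
        = (\<Sum>l\<in>S. \<Sum>j\<in>S. gram D0 l j * (\<Sum>i\<in>S. Theta DT S l i * Theta D0 S j i))"
    proof -
      have "(\<Sum>j\<in>S. \<Sum>l\<in>S. gram D0 j l * (\<Sum>i\<in>S. Theta D0 S j i * Theta DT S l i))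
          = (\<Sum>l\<in>S. \<Sum>j\<in>S. gram D0 j l * (\<Sum>i\<in>S. Theta D0 S j i * Theta DT S l i))" by (rule sum.swap)
      also have "\<dots> = (\<Sum>l\<in>S. \<Sum>j\<in>S. gram D0 l j * (\<Sum>i\<in>S. Theta DT S l i * Theta D0 S j i))"
      proof (intro sum.cong refl)
        fix l j
        have "gram D0 j l = gram D0 l j" by (simp add: gram_def inner_commute)
        moreover have "(\<Sum>i\<in>S. Theta D0 S j i * Theta DT S l i) = (\<Sum>i\<in>S. Theta DT S l i * Theta D0 S j i)"
          by (simp add: mult.commute)
        ultimately show "gram D0 j l * (\<Sum>i\<in>S. Theta D0 S j i * Theta DT S l i) = gram D0 l j * (\<Sum>i\<in>S. Theta DT S l i * Theta D0 S j i)"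
          by simp
      qed
      finally show ?thesis .
    qed
    also have "\<dots> = (\<Sum>l\<in>S. \<Sum>i\<in>S. Theta DT S l i * (\<Sum>j\<in>S. gram D0 l j * Theta D0 S j i))" by (rule trip_swap)
    also have "\<dots> = (\<Sum>l\<in>S. \<Sum>i\<in>S. Theta DT S l i * (if l = i then 1 else 0))"
      using i0 by (intro sum.cong refl) (simp add: inv_prop_def)
    also have "\<dots> = (\<Sum>j\<in>S. Theta DT S j j)" by (rule sum_delta2[OF fin])
    finally show ?thesis .
  qed
  have "(\<Sum>j\<in>S. \<Sum>l\<in>S. (inner (dt j) (dt l) - inner (d j) (d l)) * (\<Sum>i\<in>S. Theta D0 S j i * Theta DT S l i))
     = (\<Sum>j\<in>S. \<Sum>l\<in>S. gram DT j l * (\<Sum>i\<in>S. Theta D0 S j i * Theta DT S l i))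
       - (\<Sum>j\<in>S. \<Sum>l\<in>S. gram D0 j l * (\<Sum>i\<in>S. Theta D0 S j i * Theta DT S l i))"
    by (simp add: gram_def left_diff_distrib sum_subtractf)
  also have "\<dots> = (\<Sum>j\<in>S. Theta D0 S j j - Theta DT S j j)" using A1 A2 by (simp add: sum_subtractf)
  finally show ?thesis by simp
qed

lemma prod_bound:
  assumes S: "S \<in> set_pmf J" and j: "j \<in> S" and l: "l \<in> S" and jl: "j \<noteq> l"
  shows "\<bar>\<Sum>i\<in>S. Theta D0 S j i * Theta DT S l i\<bar> \<le> 5/2 * \<mu> * Q2^2"
proof -
  have fin: "finite S" by simp
  have cS: "card S = k" using S supp_card by auto
  let ?f = "\<lambda>i. Theta D0 S j i * Theta DT S l i"
  have split: "(\<Sum>i\<in>S. ?f i) = ?f j + ?f l + (\<Sum>i\<in>S-{j}-{l}. ?f i)"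
    using fin j l jl by (simp add: sum.remove[of S j] sum.remove[of "S-{j}" l])
  have Q2nn: "0 \<le> Q2" by simp
  have mQ: "0 \<le> \<mu> * Q2" using mu_nonneg by simp
  have b1: "\<bar>?f j\<bar> \<le> Q2 * (\<mu> * Q2)"
    unfolding abs_mult using Th0(2)[OF S j] Tht(3)[OF S l j] jl by (intro mult_mono) auto
  have b2: "\<bar>?f l\<bar> \<le> (\<mu> * Q2) * Q2"
    unfolding abs_mult using Th0(3)[OF S j l jl] Tht(2)[OF S l] by (intro mult_mono) auto
  have b3: "\<bar>\<Sum>i\<in>S-{j}-{l}. ?f i\<bar> \<le> real k * ((\<mu> * Q2) * (\<mu> * Q2))"
  proof -
    have "\<bar>\<Sum>i\<in>S-{j}-{l}. ?f i\<bar> \<le> (\<Sum>i\<in>S-{j}-{l}. \<bar>?f i\<bar>)" by (rule sum_abs)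
    also have "\<dots> \<le> (\<Sum>i\<in>S-{j}-{l}. (\<mu> * Q2) * (\<mu> * Q2))"
    proof (rule sum_mono)
      fix i assume "i \<in> S-{j}-{l}"
      hence i: "i \<in> S" "i \<noteq> j" "i \<noteq> l" by auto
      show "\<bar>?f i\<bar> \<le> (\<mu> * Q2) * (\<mu> * Q2)"
        unfolding abs_mult using Th0(3)[OF S j i(1) i(2)[symmetric]] Tht(3)[OF S l i(1) i(3)[symmetric]]
        by (intro mult_mono) auto
    qed
    also have "\<dots> = real (card (S-{j}-{l})) * ((\<mu> * Q2) * (\<mu> * Q2))" by simp
    also have "\<dots> \<le> real k * ((\<mu> * Q2) * (\<mu> * Q2))"
    proof -
      have "card (S-{j}-{l}) \<le> card S" by (rule card_mono) (auto simp: fin)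
      thus ?thesis using cS by (intro mult_right_mono) auto
    qed
    finally show ?thesis .
  qed
  have "\<bar>\<Sum>i\<in>S. ?f i\<bar> \<le> Q2 * (\<mu> * Q2) + (\<mu> * Q2) * Q2 + real k * ((\<mu> * Q2) * (\<mu> * Q2))"
    unfolding split using b1 b2 b3 by (smt (verit))
  also have "\<dots> = \<mu> * Q2^2 * (2 + real k * \<mu>)" by (simp add: power2_eq_square algebra_simps)
  also have "\<dots> \<le> \<mu> * Q2^2 * (5/2)" using kmu_lt mu_nonneg by (intro mult_left_mono) auto
  finally show ?thesis by (simp add: mult_ac)
qed

lemma ineq3:
  "\<bar>measure_pmf.expectation J (\<lambda>S. \<Sum>j\<in>S. Theta D0 S j j - Theta DT S j j)\<bar>
     \<le> 8 * (Qt D0 k t) ^ 4 * t * (real k / real CARD('p)) * a * (real k * \<mu>)"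
proof -
  let ?\<beta> = "5/2 * \<mu> * Q2^2"
  let ?D = "\<lambda>j l. \<bar>inner (dt j) (dt l) - inner (d j) (d l)\<bar>"
  have "\<bar>measure_pmf.expectation J (\<lambda>S. \<Sum>j\<in>S. Theta D0 S j j - Theta DT S j j)\<bar>
      \<le> measure_pmf.expectation J (\<lambda>S. \<Sum>j\<in>S. \<Sum>l\<in>S-{j}. ?\<beta> * ?D j l)"
  proof (rule E_abs)
    fix S assume S: "S \<in> set_pmf J"
    have fin: "finite S" by simp
    have "\<bar>\<Sum>j\<in>S. Theta D0 S j j - Theta DT S j j\<bar>
       = \<bar>\<Sum>j\<in>S. \<Sum>l\<in>S. (inner (dt j) (dt l) - inner (d j) (d l)) * (\<Sum>i\<in>S. Theta D0 S j i * Theta DT S l i)\<bar>"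
      by (subst trace_diff[OF S]) (rule refl)
    also have "\<dots> \<le> (\<Sum>j\<in>S. \<bar>\<Sum>l\<in>S. (inner (dt j) (dt l) - inner (d j) (d l)) * (\<Sum>i\<in>S. Theta D0 S j i * Theta DT S l i)\<bar>)"
      by (rule sum_abs)
    also have "\<dots> \<le> (\<Sum>j\<in>S. \<Sum>l\<in>S-{j}. ?\<beta> * ?D j l)"
    proof (rule sum_mono)
      fix j assume j: "j \<in> S"
      have "(\<Sum>l\<in>S. (inner (dt j) (dt l) - inner (d j) (d l)) * (\<Sum>i\<in>S. Theta D0 S j i * Theta DT S l i))
         = (\<Sum>l\<in>S-{j}. (inner (dt j) (dt l) - inner (d j) (d l)) * (\<Sum>i\<in>S. Theta D0 S j i * Theta DT S l i))"
        by (subst sum.remove[OF fin j]) (simp add: dtdt dd)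
      also have "\<bar>\<dots>\<bar> \<le> (\<Sum>l\<in>S-{j}. \<bar>(inner (dt j) (dt l) - inner (d j) (d l)) * (\<Sum>i\<in>S. Theta D0 S j i * Theta DT S l i)\<bar>)"
        by (rule sum_abs)
      also have "\<dots> \<le> (\<Sum>l\<in>S-{j}. ?\<beta> * ?D j l)"
      proof (rule sum_mono)
        fix l assume "l \<in> S-{j}"
        hence l: "l \<in> S" "j \<noteq> l" by auto
        show "\<bar>(inner (dt j) (dt l) - inner (d j) (d l)) * (\<Sum>i\<in>S. Theta D0 S j i * Theta DT S l i)\<bar> \<le> ?\<beta> * ?D j l"
        proof -
          have "?D j l * \<bar>\<Sum>i\<in>S. Theta D0 S j i * Theta DT S l i\<bar> \<le> ?D j l * ?\<beta>"
            by (rule mult_left_mono[OF prod_bound[OF S j l(1) l(2)]]) simp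
          thus ?thesis unfolding abs_mult by (simp add: mult.commute)
        qed
      qed
      finally show "\<bar>\<Sum>l\<in>S. (inner (dt j) (dt l) - inner (d j) (d l)) * (\<Sum>i\<in>S. Theta D0 S j i * Theta DT S l i)\<bar>
          \<le> (\<Sum>l\<in>S-{j}. ?\<beta> * ?D j l)" .
    qed
    finally show "\<bar>\<Sum>j\<in>S. Theta D0 S j j - Theta DT S j j\<bar> \<le> (\<Sum>j\<in>S. \<Sum>l\<in>S-{j}. ?\<beta> * ?D j l)" .
  qed
  also have "\<dots> \<le> (real k / real CARD('p)) * (real k / real CARD('p)) * (\<Sum>j\<in>UNIV. \<Sum>l\<in>UNIV. ?\<beta> * ?D j l)"
    by (rule E2s_le) (use mu_nonneg in simp)
  also have "(\<Sum>j\<in>UNIV. \<Sum>l\<in>UNIV. ?\<beta> * ?D j l) = ?\<beta> * (\<Sum>j\<in>UNIV. \<Sum>l\<in>UNIV. ?D j l)"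
    by (simp add: sum_distrib_left)
  also have "(real k / real CARD('p)) * (real k / real CARD('p)) * (?\<beta> * (\<Sum>j\<in>UNIV. \<Sum>l\<in>UNIV. ?D j l))
       \<le> (real k / real CARD('p)) * (real k / real CARD('p)) * (?\<beta> * (real CARD('p) * t * (2 * a + t)))"
    using SB_Delta mu_nonneg by (intro mult_left_mono) auto
  also have "\<dots> = 5/2 * Q2^2 * t * (real k / real CARD('p)) * (2 * a + t) * (real k * \<mu>)"
    by (simp add: field_simps)
  also have "\<dots> \<le> 5/2 * Q2^2 * t * (real k / real CARD('p)) * (3 * a) * (real k * \<mu>)"
  proof -
    have "2 * a + t \<le> 3 * a" using a_ge1 t_le by simp
    moreover have "0 \<le> 5/2 * Q2^2 * t * (real k / real CARD('p))" using t_nonneg by simp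
    moreover have "0 \<le> real k * \<mu>" using mu_nonneg by simp
    ultimately show ?thesis by (intro mult_right_mono mult_left_mono) auto
  qed
  also have "\<dots> \<le> 8 * Q2^2 * t * (real k / real CARD('p)) * a * (real k * \<mu>)"
  proof -
    define X where "X = Q2^2 * t * (real k / real CARD('p)) * a * (real k * \<mu>)"
    have X0: "0 \<le> X" unfolding X_def using t_nonneg mu_nonneg a_ge1 by simp
    have e1: "5/2 * Q2^2 * t * (real k / real CARD('p)) * (3 * a) * (real k * \<mu>) = 15/2 * X"
      unfolding X_def by (simp add: algebra_simps)
    have e2: "8 * Q2^2 * t * (real k / real CARD('p)) * a * (real k * \<mu>) = 8 * X"
      unfolding X_def by (simp add: algebra_simps)
    show ?thesis by (subst e1, subst e2) (use X0 in linarith)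
  qed
  also have "Q2^2 = (Qt D0 k t)^4" by simp
  finally show ?thesis .
qed

end

lemma trace_one:
  fixes G B :: "'a \<Rightarrow> 'a \<Rightarrow> real"
  assumes fin: "finite S" and B: "\<forall>i\<in>S. \<forall>j\<in>S. (\<Sum>l\<in>S. G i l * B l j) = (if i = j then 1 else 0)"
  shows "(\<Sum>i\<in>S. \<Sum>l\<in>S. B i l * G l i) = real (card S)"
proof -
  have "(\<Sum>i\<in>S. \<Sum>l\<in>S. B i l * G l i) = (\<Sum>l\<in>S. \<Sum>i\<in>S. G l i * B i l)"
    by (subst sum.swap) (simp add: mult.commute)
  also have "\<dots> = (\<Sum>l\<in>S. 1)" using B by (intro sum.cong refl) simp
  finally show ?thesis by simp
qed

context L14 begin

lemma Y_eq:
  assumes S: "S \<in> set_pmf J"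
  shows "(\<Sum>i\<in>S. (\<Sum>l\<in>S. Theta D0 S i l * inner (d l) (d i))
                 - (\<Sum>l\<in>S. Theta DT S i l * inner (dt l) (d i)))
       = (\<Sum>i\<in>S. \<Sum>l\<in>S. Theta DT S i l * inner (dt l) (e i))"
proof -
  have fin: "finite S" by simp
  have B0: "\<forall>i\<in>S. \<forall>j\<in>S. (\<Sum>l\<in>S. gram D0 i l * Theta D0 S l j) = (if i = j then 1 else 0)"
    using Th0(1)[OF S] unfolding inv_prop_def by blast
  have Bt: "\<forall>i\<in>S. \<forall>j\<in>S. (\<Sum>l\<in>S. gram DT i l * Theta DT S l j) = (if i = j then 1 else 0)"
    using Tht(1)[OF S] unfolding inv_prop_def by blast
  have T0: "(\<Sum>i\<in>S. \<Sum>l\<in>S. Theta D0 S i l * inner (d l) (d i)) = real (card S)"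
    using trace_one[OF fin B0] unfolding gram_def .
  have Tt: "(\<Sum>i\<in>S. \<Sum>l\<in>S. Theta DT S i l * inner (dt l) (dt i)) = real (card S)"
    using trace_one[OF fin Bt] unfolding gram_def .
  have "(\<Sum>i\<in>S. \<Sum>l\<in>S. Theta DT S i l * inner (dt l) (d i))
      = (\<Sum>i\<in>S. \<Sum>l\<in>S. Theta DT S i l * inner (dt l) (dt i)) - (\<Sum>i\<in>S. \<Sum>l\<in>S. Theta DT S i l * inner (dt l) (e i))"
    by (simp add: inner_diff_right right_diff_distrib sum_subtractf)
  thus ?thesis using T0 Tt by (simp add: sum_subtractf)
qed

lemma Fsplit: "inner (dt l) (e i) = inner (d l) (e i) + inner (e l) (e i)"
  by (simp add: inner_diff_left)

lemma SB_F: "(\<Sum>i\<in>UNIV. \<Sum>l\<in>UNIV. \<bar>inner (dt l) (e i)\<bar>) \<le> real CARD('p) * t * (a + t)"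
proof -
  have "(\<Sum>i\<in>UNIV. \<Sum>l\<in>UNIV. \<bar>inner (dt l) (e i)\<bar>)
     \<le> (\<Sum>i\<in>UNIV. \<Sum>l\<in>UNIV. \<bar>inner (d l) (e i)\<bar> + \<bar>inner (e l) (e i)\<bar>)"
    unfolding Fsplit by (intro sum_mono) (rule abs_triangle_ineq)
  also have "\<dots> = (\<Sum>i\<in>UNIV. \<Sum>l\<in>UNIV. \<bar>inner (d l) (e i)\<bar>) + (\<Sum>i\<in>UNIV. \<Sum>l\<in>UNIV. \<bar>inner (e l) (e i)\<bar>)"
    by (simp add: sum.distrib)
  finally show ?thesis using SB1 SB2 by (simp add: algebra_simps power2_eq_square)
qed

lemma ineq2:
  "\<bar>measure_pmf.expectation J
        (\<lambda>S. \<Sum>i\<in>S. (\<Sum>l\<in>S. Theta D0 S i l * inner (column l D0) (column i D0))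
                    - (\<Sum>l\<in>S. Theta DT S i l * inner (column l DT) (column i D0)))\<bar>
      \<le> 3 * Q2 * t * (real k / real CARD('p)) * a * (real k * \<mu>)"
proof -
  let ?F = "\<lambda>l i. inner (dt l) (e i)"
  let ?Y = "\<lambda>S. Q2 * (\<Sum>i\<in>S. ?F i i) + \<mu> * Q2 * (\<Sum>i\<in>S. \<Sum>l\<in>S-{i}. \<bar>?F l i\<bar>)"
  have "\<bar>measure_pmf.expectation J
        (\<lambda>S. \<Sum>i\<in>S. (\<Sum>l\<in>S. Theta D0 S i l * inner (column l D0) (column i D0))
                    - (\<Sum>l\<in>S. Theta DT S i l * inner (column l DT) (column i D0)))\<bar>
       \<le> measure_pmf.expectation J ?Y"
  proof (rule E_abs)
    fix S assume S: "S \<in> set_pmf J"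
    have fin: "finite S" by simp
    have "\<bar>\<Sum>i\<in>S. (\<Sum>l\<in>S. Theta D0 S i l * inner (column l D0) (column i D0))
                    - (\<Sum>l\<in>S. Theta DT S i l * inner (column l DT) (column i D0))\<bar>
        = \<bar>\<Sum>i\<in>S. \<Sum>l\<in>S. Theta DT S i l * ?F l i\<bar>" using Y_eq[OF S] by simp
    also have "\<dots> \<le> (\<Sum>i\<in>S. \<bar>\<Sum>l\<in>S. Theta DT S i l * ?F l i\<bar>)" by (rule sum_abs)
    also have "\<dots> \<le> (\<Sum>i\<in>S. Q2 * ?F i i + \<mu> * Q2 * (\<Sum>l\<in>S-{i}. \<bar>?F l i\<bar>))"
    proof (rule sum_mono)
      fix i assume i: "i \<in> S"
      have "(\<Sum>l\<in>S. Theta DT S i l * ?F l i) = Theta DT S i i * ?F i i + (\<Sum>l\<in>S-{i}. Theta DT S i l * ?F l i)"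
        by (rule sum.remove[OF fin i])
      hence "\<bar>\<Sum>l\<in>S. Theta DT S i l * ?F l i\<bar> \<le> \<bar>Theta DT S i i * ?F i i\<bar> + (\<Sum>l\<in>S-{i}. \<bar>Theta DT S i l * ?F l i\<bar>)"
        by (simp only:) (rule order_trans[OF abs_triangle_ineq add_left_mono[OF sum_abs]])
      also have "\<bar>Theta DT S i i * ?F i i\<bar> \<le> Q2 * ?F i i"
      proof -
        have "0 \<le> ?F i i" by (simp only: dte_ee) simp
        thus ?thesis unfolding abs_mult using Tht(2)[OF S i] by (simp add: mult_right_mono)
      qed
      also have "(\<Sum>l\<in>S-{i}. \<bar>Theta DT S i l * ?F l i\<bar>) \<le> (\<Sum>l\<in>S-{i}. \<mu> * Q2 * \<bar>?F l i\<bar>)"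
      proof (rule sum_mono)
        fix l assume "l \<in> S-{i}"
        hence l: "l \<in> S" "i \<noteq> l" by auto
        show "\<bar>Theta DT S i l * ?F l i\<bar> \<le> \<mu> * Q2 * \<bar>?F l i\<bar>"
          unfolding abs_mult using Tht(3)[OF S i l(1) l(2)] by (simp add: mult_right_mono)
      qed
      finally show "\<bar>\<Sum>l\<in>S. Theta DT S i l * ?F l i\<bar> \<le> Q2 * ?F i i + \<mu> * Q2 * (\<Sum>l\<in>S-{i}. \<bar>?F l i\<bar>)"
        by (simp add: sum_distrib_left)
    qed
    also have "\<dots> = ?Y S" by (simp add: sum.distrib sum_distrib_left)
    finally show "\<bar>\<Sum>i\<in>S. (\<Sum>l\<in>S. Theta D0 S i l * inner (column l D0) (column i D0))
                    - (\<Sum>l\<in>S. Theta DT S i l * inner (column l DT) (column i D0))\<bar> \<le> ?Y S" .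
  qed
  also have "measure_pmf.expectation J ?Y = Q2 * measure_pmf.expectation J (\<lambda>S. \<Sum>i\<in>S. ?F i i)
       + \<mu> * Q2 * measure_pmf.expectation J (\<lambda>S. \<Sum>i\<in>S. \<Sum>l\<in>S-{i}. \<bar>?F l i\<bar>)"
    by (simp add: E_add E_cmult)
  also have "measure_pmf.expectation J (\<lambda>S. \<Sum>i\<in>S. ?F i i) = (real k / real CARD('p)) * (E2 / 2)"
    unfolding E1 E2_def by (simp add: dte_ee sum_divide_distrib)
  also have "Q2 * ((real k / real CARD('p)) * (E2 / 2)) \<le> Q2 * ((real k / real CARD('p)) * (t^2 / 2))"
    using E2_le by (intro mult_left_mono) auto
  also have "\<mu> * Q2 * measure_pmf.expectation J (\<lambda>S. \<Sum>i\<in>S. \<Sum>l\<in>S-{i}. \<bar>?F l i\<bar>)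
      \<le> \<mu> * Q2 * ((real k / real CARD('p)) * (real k / real CARD('p)) * (real CARD('p) * t * (a + t)))"
  proof -
    have "measure_pmf.expectation J (\<lambda>S. \<Sum>i\<in>S. \<Sum>l\<in>S-{i}. \<bar>?F l i\<bar>)
        \<le> (real k / real CARD('p)) * (real k / real CARD('p)) * (\<Sum>i\<in>UNIV. \<Sum>l\<in>UNIV. \<bar>?F l i\<bar>)"
      by (rule E2s_le) simp
    also have "\<dots> \<le> (real k / real CARD('p)) * (real k / real CARD('p)) * (real CARD('p) * t * (a + t))"
      using SB_F by (intro mult_left_mono) auto
    finally show ?thesis using mu_nonneg by (intro mult_left_mono) auto
  qed
  also have "Q2 * ((real k / real CARD('p)) * (t^2 / 2))
      + \<mu> * Q2 * ((real k / real CARD('p)) * (real k / real CARD('p)) * (real CARD('p) * t * (a + t)))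
      = Q2 * t * (real k / real CARD('p)) * (t / 2 + (real k * \<mu>) * (a + t))"
    by (simp add: field_simps power2_eq_square)
  also have "\<dots> \<le> Q2 * t * (real k / real CARD('p)) * (3 * a * (real k * \<mu>))"
  proof (rule mult_left_mono)
    have K3: "3 * t \<le> real k * \<mu>" by (rule kmu_ge)
    have "(real k * \<mu>) * t \<le> (real k * \<mu>) * (1/6)" using t_le mu_nonneg by (intro mult_left_mono) auto
    moreover have "(real k * \<mu>) * 1 \<le> (real k * \<mu>) * a" using a_ge1 mu_nonneg by (intro mult_left_mono) auto
    moreover have "0 \<le> real k * \<mu>" using mu_nonneg by simp
    ultimately show "t / 2 + (real k * \<mu>) * (a + t) \<le> 3 * a * (real k * \<mu>)"
      using K3 by (simp only: distrib_left mult.commute[of a] mult.assoc)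
  next
    show "0 \<le> Q2 * t * (real k / real CARD('p))" using t_nonneg by simp
  qed
  finally show ?thesis by (simp add: mult_ac)
qed

end

lemma orth_proj_ex:
  fixes A :: "'a::euclidean_space set"
  shows "\<exists>!y. y \<in> span A \<and> (\<forall>z\<in>span A. inner (x - y) z = 0)"
proof -
  obtain y z where y: "y \<in> span A" and z: "\<And>w. w \<in> span A \<Longrightarrow> orthogonal z w" and xyz: "x = y + z"
    using orthogonal_subspace_decomp_exists[of A x] by blast
  have ex: "y \<in> span A \<and> (\<forall>w\<in>span A. inner (x - y) w = 0)"
    using y z xyz by (simp add: orthogonal_def)
  have un: "y1 = y2" if h1: "y1 \<in> span A \<and> (\<forall>w\<in>span A. inner (x - y1) w = 0)"
    and h2: "y2 \<in> span A \<and> (\<forall>w\<in>span A. inner (x - y2) w = 0)" for y1 y2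
  proof -
    have m: "y1 - y2 \<in> span A" using h1 h2 by (simp add: span_diff)
    have "inner (y1 - y2) (y1 - y2) = inner (x - y2) (y1 - y2) - inner (x - y1) (y1 - y2)"
      by (simp add: inner_diff_left)
    also have "\<dots> = 0" using h1 h2 m by simp
    finally show ?thesis by simp
  qed
  show ?thesis using ex un by blast
qed

lemma orth_proj_prop:
  fixes A :: "'a::euclidean_space set"
  shows "orth_proj (span A) x \<in> span A" "\<And>z. z \<in> span A \<Longrightarrow> inner (x - orth_proj (span A) x) z = 0"
  using theI'[OF orth_proj_ex[of A x]] unfolding orth_proj_def by auto

lemma orth_proj_eq:
  fixes A :: "'a::euclidean_space set"
  assumes "y \<in> span A" "\<And>z. z \<in> span A \<Longrightarrow> inner (x - y) z = 0"
  shows "orth_proj (span A) x = y"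
  unfolding orth_proj_def by (rule the1_equality[OF orth_proj_ex]) (use assms in auto)

context L14 begin

definition "RS = {\<delta>. \<forall>J (z::'p \<Rightarrow> real). card J = k \<longrightarrow>
      (1 - \<delta>) * (\<Sum>j\<in>J. (z j)\<^sup>2) \<le> (norm (\<Sum>j\<in>J. z j *\<^sub>R column j D0))\<^sup>2 \<and>
      (norm (\<Sum>j\<in>J. z j *\<^sub>R column j D0))\<^sup>2 \<le> (1 + \<delta>) * (\<Sum>j\<in>J. (z j)\<^sup>2)}"

lemma rip_eq: "rip D0 k = Inf RS" by (simp add: rip_def RS_def)

lemma norm_sum_sq:
  assumes fin: "finite A"
  shows "(norm (\<Sum>j\<in>A. z j *\<^sub>R d j))\<^sup>2 = (\<Sum>i\<in>A. (z i)^2) + (\<Sum>i\<in>A. \<Sum>j\<in>A-{i}. z i * z j * inner (d i) (d j))"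
proof -
  have "(norm (\<Sum>j\<in>A. z j *\<^sub>R d j))\<^sup>2 = (\<Sum>j\<in>A. \<Sum>n\<in>A. z j * (z n * inner (d n) (d j)))"
    by (simp add: power2_norm_eq_inner inner_sum_left inner_sum_right sum_distrib_left mult_ac)
  also have "\<dots> = (\<Sum>i\<in>A. \<Sum>j\<in>A. z i * z j * inner (d i) (d j))"
    by (subst sum.swap) (simp add: mult_ac)
  also have "\<dots> = (\<Sum>i\<in>A. (z i)^2 + (\<Sum>j\<in>A-{i}. z i * z j * inner (d i) (d j)))"
  proof (rule sum.cong[OF refl])
    fix i assume i: "i \<in> A"
    show "(\<Sum>j\<in>A. z i * z j * inner (d i) (d j)) = (z i)^2 + (\<Sum>j\<in>A-{i}. z i * z j * inner (d i) (d j))"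
      by (subst sum.remove[OF fin i]) (simp add: dd power2_eq_square)
  qed
  also have "\<dots> = (\<Sum>i\<in>A. (z i)^2) + (\<Sum>i\<in>A. \<Sum>j\<in>A-{i}. z i * z j * inner (d i) (d j))"
    by (rule sum.distrib)
  finally show ?thesis .
qed

lemma cross_bound:
  assumes fin: "finite A"
  shows "\<bar>\<Sum>i\<in>A. \<Sum>j\<in>A-{i}. z i * z j * inner (d i) (d j)\<bar> \<le> mu0 D0 * (real (card A) - 1) * (\<Sum>i\<in>A. (z i)^2)"
proof -
  have "\<bar>\<Sum>i\<in>A. \<Sum>j\<in>A-{i}. z i * z j * inner (d i) (d j)\<bar> \<le> (\<Sum>i\<in>A. \<Sum>j\<in>A-{i}. \<bar>z i * z j * inner (d i) (d j)\<bar>)"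
    by (rule order_trans[OF sum_abs sum_mono[OF sum_abs]])
  also have "\<dots> \<le> (\<Sum>i\<in>A. \<Sum>j\<in>A-{i}. mu0 D0 * (((z i)^2 + (z j)^2) / 2))"
  proof (intro sum_mono)
    fix i j assume "j \<in> A - {i}"
    hence ij: "i \<noteq> j" by auto
    have "\<bar>z i * z j\<bar> \<le> ((z i)^2 + (z j)^2) / 2"
    proof -
      have h: "0 \<le> (\<bar>z i\<bar> - \<bar>z j\<bar>)^2" by simp
      have "(\<bar>z i\<bar> - \<bar>z j\<bar>)^2 = (z i)^2 + (z j)^2 - 2 * \<bar>z i * z j\<bar>"
        by (simp add: power2_diff abs_mult)
      hence "2 * \<bar>z i * z j\<bar> \<le> (z i)^2 + (z j)^2" using h by linarith
      thus ?thesis by simp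
    qed
    hence "\<bar>z i * z j\<bar> * \<bar>inner (d i) (d j)\<bar> \<le> ((z i)^2 + (z j)^2) / 2 * mu0 D0"
      using mu0_ge[OF ij] by (intro mult_mono) auto
    thus "\<bar>z i * z j * inner (d i) (d j)\<bar> \<le> mu0 D0 * (((z i)^2 + (z j)^2) / 2)"
      by (simp add: abs_mult mult_ac)
  qed
  also have "\<dots> = mu0 D0 * (\<Sum>i\<in>A. \<Sum>j\<in>A-{i}. ((z i)^2 + (z j)^2) / 2)"
    by (simp add: sum_distrib_left)
  also have "(\<Sum>i\<in>A. \<Sum>j\<in>A-{i}. ((z i)^2 + (z j)^2) / 2) = (real (card A) - 1) * (\<Sum>i\<in>A. (z i)^2)"
  proof -
    have "(\<Sum>i\<in>A. \<Sum>j\<in>A-{i}. ((z i)^2 + (z j)^2) / 2)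
       = (\<Sum>i\<in>A. ((real (card A) - 1) * (z i)^2 + ((\<Sum>j\<in>A. (z j)^2) - (z i)^2)) / 2)"
    proof (rule sum.cong[OF refl])
      fix i assume i: "i \<in> A"
      have "(\<Sum>j\<in>A-{i}. ((z i)^2 + (z j)^2) / 2) = ((\<Sum>j\<in>A-{i}. (z i)^2) + (\<Sum>j\<in>A-{i}. (z j)^2)) / 2"
        by (simp add: sum.distrib sum_divide_distrib[symmetric])
      also have "(\<Sum>j\<in>A-{i}. (z i)^2) = (real (card A) - 1) * (z i)^2"
      proof -
        have "0 < card A" using fin i by (auto simp: card_gt_0_iff)
        hence cA: "1 \<le> card A" by simp
        have "card (A - {i}) = card A - 1" using i by (simp add: card_Diff_singleton)
        thus ?thesis using cA by (simp add: of_nat_diff)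
      qed
      also have "(\<Sum>j\<in>A-{i}. (z j)^2) = (\<Sum>j\<in>A. (z j)^2) - (z i)^2"
        using fin i by (simp add: sum_diff1)
      finally show "(\<Sum>j\<in>A-{i}. ((z i)^2 + (z j)^2) / 2) = ((real (card A) - 1) * (z i)^2 + ((\<Sum>j\<in>A. (z j)^2) - (z i)^2)) / 2" .
    qed
    also have "\<dots> = (real (card A) - 1) * (\<Sum>i\<in>A. (z i)^2)"
      by (simp add: sum_divide_distrib[symmetric] sum.distrib sum_subtractf sum_distrib_left[symmetric] algebra_simps, simp add: field_simps)
    finally show ?thesis .
  qed
  finally show ?thesis by (simp add: mult_ac)
qed

lemma R1: "(real k - 1) * mu0 D0 \<in> RS"
  unfolding RS_def
proof (intro CollectI allI impI conjI)
  fix A :: "'p set" and z :: "'p \<Rightarrow> real" assume c: "card A = k"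
  hence fin: "finite A" using kpos by (metis card.infinite not_one_le_zero)
  have eq: "(norm (\<Sum>j\<in>A. z j *\<^sub>R d j))\<^sup>2 = (\<Sum>i\<in>A. (z i)^2) + (\<Sum>i\<in>A. \<Sum>j\<in>A-{i}. z i * z j * inner (d i) (d j))"
    by (rule norm_sum_sq[OF fin])
  have b: "\<bar>\<Sum>i\<in>A. \<Sum>j\<in>A-{i}. z i * z j * inner (d i) (d j)\<bar> \<le> (real k - 1) * mu0 D0 * (\<Sum>i\<in>A. (z i)^2)"
    using cross_bound[OF fin, of z] c by (simp add: mult_ac)
  show "(1 - (real k - 1) * mu0 D0) * (\<Sum>j\<in>A. (z j)\<^sup>2) \<le> (norm (\<Sum>j\<in>A. z j *\<^sub>R d j))\<^sup>2"
    unfolding eq using b by (simp add: algebra_simps)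
  show "(norm (\<Sum>j\<in>A. z j *\<^sub>R d j))\<^sup>2 \<le> (1 + (real k - 1) * mu0 D0) * (\<Sum>j\<in>A. (z j)\<^sup>2)"
    unfolding eq using b by (simp add: algebra_simps)
qed

lemma R2: "\<delta> \<in> RS \<Longrightarrow> 0 \<le> \<delta>"
proof -
  assume h: "\<delta> \<in> RS"
  obtain S0 where S0: "S0 \<in> set_pmf J" using set_pmf_not_empty[of J] by blast
  have c: "card S0 = k" using S0 supp_card by auto
  hence "S0 \<noteq> {}" using kpos by auto
  then obtain j0 where j0: "j0 \<in> S0" by blast
  have fin: "finite S0" by simp
  let ?z = "\<lambda>j. if j = j0 then 1 else (0::real)"
  have zz: "\<And>j. (?z j)^2 = ?z j" by simp
  have s1: "(\<Sum>j\<in>S0. (?z j)^2) = 1" unfolding zz using fin j0 by simp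
  have zd: "\<And>j. ?z j *\<^sub>R d j = (if j = j0 then d j else 0)" by simp
  have s2: "(\<Sum>j\<in>S0. ?z j *\<^sub>R d j) = d j0" unfolding zd using fin j0 by simp
  have all: "\<forall>J (z::'p\<Rightarrow>real). card J = k \<longrightarrow> (1 - \<delta>) * (\<Sum>j\<in>J. (z j)\<^sup>2) \<le> (norm (\<Sum>j\<in>J. z j *\<^sub>R d j))\<^sup>2"
    using h by (simp add: RS_def)
  have "(1 - \<delta>) * (\<Sum>j\<in>S0. (?z j)\<^sup>2) \<le> (norm (\<Sum>j\<in>S0. ?z j *\<^sub>R d j))\<^sup>2"
    by (rule all[rule_format, OF c])
  thus "0 \<le> \<delta>" using s1 s2 unit_cols by simp
qed

lemma RS_ne: "RS \<noteq> {}" using R1 by blast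
lemma RS_bdd: "bdd_below RS" using R2 by (auto simp: bdd_below_def)

lemma rip_nonneg: "0 \<le> rip D0 k"
  unfolding rip_eq by (rule cInf_greatest[OF RS_ne]) (rule R2)

lemma rip_le: "rip D0 k \<le> (real k - 1) * mu0 D0"
  unfolding rip_eq by (rule cInf_lower[OF R1 RS_bdd])

lemma rip_lower:
  assumes c: "card A = k"
  shows "(1 - rip D0 k) * (\<Sum>j\<in>A. (z j)^2) \<le> (norm (\<Sum>j\<in>A. z j *\<^sub>R d j))^2"
proof (cases "(\<Sum>j\<in>A. (z j)^2) = 0")
  case True thus ?thesis by simp
next
  case False
  let ?s = "\<Sum>j\<in>A. (z j)^2" and ?N = "(norm (\<Sum>j\<in>A. z j *\<^sub>R d j))^2"
  have spos: "0 < ?s" using False by (simp add: sum_nonneg order_le_neq_trans)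
  have "1 - ?N / ?s \<le> Inf RS"
  proof (rule cInf_greatest[OF RS_ne])
    fix \<delta> assume "\<delta> \<in> RS"
    hence "(1 - \<delta>) * ?s \<le> ?N" using c unfolding RS_def by blast
    thus "1 - ?N / ?s \<le> \<delta>" using spos by (simp add: field_simps)
  qed
  hence "1 - rip D0 k \<le> ?N / ?s" unfolding rip_eq by simp
  thus ?thesis using spos by (simp add: field_simps)
qed

abbreviation "sig \<equiv> sqrt (1 - rip D0 k) - t"

lemma rip_half: "rip D0 k < 1/2"
proof -
  have "(real k - 1) * mu0 D0 \<le> real k * \<mu>"
    using mu0_le_mu mu0_nonneg kpos by (intro mult_mono) auto
  thus ?thesis using rip_le kmu_lt by linarith
qed

lemma sig_pos: "0 < sig"
proof -
  have "(1/6::real)^2 < 1 - rip D0 k" using rip_half by (simp add: power2_eq_square)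
  hence "1/6 < sqrt (1 - rip D0 k)" by (rule real_less_rsqrt)
  thus ?thesis using t_le by simp
qed

lemma sig_le1: "sig \<le> 1"
proof -
  have "sqrt (1 - rip D0 k) \<le> 1" using rip_nonneg by simp
  thus ?thesis using t_nonneg by linarith
qed

lemma Ct_eq: "Ct D0 k t = 1 / sig" by (simp add: Ct_def)

lemma Ct_ge1: "1 \<le> Ct D0 k t" unfolding Ct_eq using sig_pos sig_le1 by simp

lemma lower_dt:
  assumes S: "S \<in> set_pmf J"
  shows "sig * sqrt (\<Sum>l\<in>S. (z l)^2) \<le> norm (\<Sum>l\<in>S. z l *\<^sub>R dt l)"
proof -
  have fin: "finite S" by simp
  have c: "card S = k" using S supp_card by auto
  let ?Z = "sqrt (\<Sum>l\<in>S. (z l)^2)"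
  have eq: "(\<Sum>l\<in>S. z l *\<^sub>R dt l) = (\<Sum>l\<in>S. z l *\<^sub>R d l) + (\<Sum>l\<in>S. z l *\<^sub>R e l)"
    by (simp add: sum.distrib[symmetric] scaleR_diff_right)
  have n0: "sqrt (1 - rip D0 k) * ?Z \<le> norm (\<Sum>l\<in>S. z l *\<^sub>R d l)"
  proof -
    have "sqrt ((1 - rip D0 k) * (\<Sum>l\<in>S. (z l)^2)) \<le> sqrt ((norm (\<Sum>l\<in>S. z l *\<^sub>R d l))^2)"
      by (rule real_sqrt_le_mono[OF rip_lower[OF c]])
    thus ?thesis by (simp add: real_sqrt_mult)
  qed
  have n1: "norm (\<Sum>l\<in>S. z l *\<^sub>R e l) \<le> ?Z * t"
  proof -
    have "norm (\<Sum>l\<in>S. z l *\<^sub>R e l) \<le> (\<Sum>l\<in>S. \<bar>z l\<bar> * norm (e l))"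
      by (rule order_trans[OF norm_sum]) simp
    also have "\<dots> \<le> ?Z * sqrt (\<Sum>l\<in>S. (norm (e l))^2)"
    proof -
      have "(\<Sum>l\<in>S. \<bar>z l\<bar> * norm (e l))^2 \<le> (\<Sum>l\<in>S. \<bar>z l\<bar>^2) * (\<Sum>l\<in>S. (norm (e l))^2)"
        by (rule Cauchy_Schwarz_ineq_sum)
      hence "sqrt ((\<Sum>l\<in>S. \<bar>z l\<bar> * norm (e l))^2) \<le> sqrt ((\<Sum>l\<in>S. (z l)^2) * (\<Sum>l\<in>S. (norm (e l))^2))"
        by (intro real_sqrt_le_mono) simp
      moreover have "0 \<le> (\<Sum>l\<in>S. \<bar>z l\<bar> * norm (e l))" by (intro sum_nonneg) simp
      ultimately show ?thesis by (simp add: real_sqrt_mult)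
    qed
    finally have A: "norm (\<Sum>l\<in>S. z l *\<^sub>R e l) \<le> ?Z * sqrt (\<Sum>l\<in>S. (norm (e l))^2)" .
    have B: "sqrt (\<Sum>l\<in>S. (norm (e l))^2) \<le> t"
    proof -
      have "(\<Sum>l\<in>S. (norm (e l))^2) \<le> (\<Sum>l\<in>UNIV. (norm (e l))^2)"
        by (rule sum_mono2) auto
      also have "\<dots> = E2" by (simp add: E2_def power2_norm_eq_inner)
      also have "\<dots> \<le> t^2" by (rule E2_le)
      finally show ?thesis using t_nonneg by (simp add: real_sqrt_le_iff real_le_lsqrt)
    qed
    show ?thesis by (rule order_trans[OF A mult_left_mono[OF B]]) (simp add: sum_nonneg)
  qed
  have "norm (\<Sum>l\<in>S. z l *\<^sub>R d l) - norm (\<Sum>l\<in>S. z l *\<^sub>R e l) \<le> norm (\<Sum>l\<in>S. z l *\<^sub>R dt l)"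
    unfolding eq by (rule norm_diff_ineq)
  thus ?thesis using n0 n1 by (simp add: algebra_simps)
qed

end

lemma final_arith:
  fixes x y a C t E2 E L K :: real
  assumes x0: "0 \<le> x" and x1: "x \<le> 1" and y: "y = sqrt x" and a1: "1 \<le> a" and C1: "1 \<le> C"
    and t0: "0 \<le> t" and t1: "t \<le> 1/6"
    and E2u: "E2 \<le> t^2" and E2l: "t^2 - t^4/12 \<le> E2"
    and EL: "x * E2 * (1 - L) \<le> E" and E0: "0 \<le> E"
    and Ld: "L = C^2 * ((1 - x) * t^2 / 4 + x * (a + t)^2)"
    and Kd: "K = C * (a * y + t)"
  shows "(1 - K^2) * x * t^2 \<le> E"
proof (cases "1 \<le> K")
  case True
  hence "1 \<le> K^2" by (simp add: one_le_power)
  hence "(1 - K^2) * x * t^2 \<le> 0" using x0 by (simp add: mult_nonpos_nonneg)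
  thus ?thesis using E0 by linarith
next
  case False
  hence K1: "K < 1" by simp
  have y0: "0 \<le> y" unfolding y using x0 by simp
  have yx: "y^2 = x" unfolding y using x0 by simp
  have y1: "y \<le> 1" unfolding y using x1 by simp
  have L0: "0 \<le> L" unfolding Ld using x0 x1 t0 by (intro mult_nonneg_nonneg add_nonneg_nonneg) auto
  have "y + t \<le> a * y + t" using a1 y0 by (simp add: mult_right_mono[of 1 a y, simplified])
  also have "\<dots> \<le> C * (a * y + t)" using C1 a1 y0 t0 by (simp add: mult_right_mono[of 1 C, simplified])
  finally have yt: "y + t < 1" using K1 Kd by simp
  define m where "m = 2 * a * y * t * (1 - y) + 3/4 * t^2 * (1 - y^2)"
  have KL: "K^2 - L = C^2 * m"
    unfolding Kd Ld m_def yx[symmetric] by (simp add: power2_eq_square algebra_simps, simp add: field_simps)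
  have m12: "t^2 / 12 \<le> m"
  proof (cases "1/24 \<le> y")
    case True
    have tle: "t \<le> 1 - y" using yt by simp
    hence "t * t \<le> t * (1 - y)" using t0 by (rule mult_left_mono)
    hence "(1/24) * (t * t) \<le> y * (t * (1 - y))"
      using True t0 y0 tle by (intro mult_mono) auto
    hence f1: "2 * (1/24) * t * t \<le> 2 * y * t * (1 - y)" by (simp add: mult_ac)
    have f2: "1 * (y * t * (1 - y)) \<le> a * (y * t * (1 - y))"
      using a1 y0 t0 y1 tle by (intro mult_right_mono) auto
    have f3: "2 * y * t * (1 - y) = 2 * (y * t * (1 - y))" by (simp only: mult.assoc)
    have f4: "2 * a * y * t * (1 - y) = 2 * (a * (y * t * (1 - y)))" by (simp only: mult.assoc)
    have f5: "0 \<le> 3/4 * t^2 * (1 - y^2)" using y0 y1 by (simp add: power_le_one)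
    have f6: "t^2 / 12 = 2 * (1/24) * t * t" by (simp add: power2_eq_square)
    show ?thesis unfolding m_def using f1 f2 f3 f4 f5 f6 by linarith
  next
    case False
    hence "y^2 \<le> (1/24)^2" using y0 by (intro power_mono) auto
    hence "1/12 \<le> 3/4 * (1 - y^2)" by (simp add: power2_eq_square)
    hence g1: "t^2 * (1/12) \<le> t^2 * (3/4 * (1 - y^2))" by (intro mult_left_mono) auto
    have g2: "0 \<le> 2 * a * y * t * (1 - y)" using a1 y0 t0 y1 by simp
    have g3: "3/4 * t^2 * (1 - y^2) = t^2 * (3/4 * (1 - y^2))" by simp
    have g4: "t^2 / 12 = t^2 * (1/12)" by simp
    show ?thesis unfolding m_def using g1 g2 g3 g4 by linarith
  qed
  have "0 \<le> t^2 / 12" by simp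
  hence m0: "0 \<le> m" using m12 by linarith
  have "m \<le> C^2 * m" using C1 m0 by (simp add: mult_right_mono[of 1 "C^2" m, simplified] one_le_power)
  hence KLm: "t^2 / 12 \<le> K^2 - L" using KL m12 by linarith
  have A: "E2 - t^2 \<le> (E2 - t^2) * (1 - L)"
  proof (cases "L \<le> 1")
    case True
    have "(E2 - t^2) * 1 \<le> (E2 - t^2) * (1 - L)"
      using E2u L0 by (intro mult_left_mono_neg) auto
    thus ?thesis by simp
  next
    case False
    hence "0 \<le> (E2 - t^2) * (1 - L)" using E2u by (intro mult_nonpos_nonpos) auto
    thus ?thesis using E2u by linarith
  qed
  have B: "t^2 * (t^2 / 12) \<le> t^2 * (K^2 - L)" using KLm by (intro mult_left_mono) auto
  have "t^2 * (1 - K^2) \<le> E2 * (1 - L)"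
  proof -
    have "E2 * (1 - L) - t^2 * (1 - K^2) = (E2 - t^2) * (1 - L) + t^2 * (K^2 - L)"
      by (simp add: algebra_simps)
    moreover have "t^4 / 12 = t^2 * (t^2 / 12)" by (simp add: power_def)
    ultimately show ?thesis using A B E2l by linarith
  qed
  hence "x * (t^2 * (1 - K^2)) \<le> x * (E2 * (1 - L))" using x0 by (rule mult_left_mono)
  thus ?thesis using EL by (simp add: algebra_simps)
qed


context L14 begin

abbreviation "VV S \<equiv> (\<lambda>j. dt j) ` S"

lemma projJ_eq: "projJ DT S = orth_proj (span (VV S))" by (simp add: projJ_def)

lemma PP_in: "projJ DT S x \<in> span (VV S)"
  unfolding projJ_eq by (rule orth_proj_prop(1))

lemma PP_orth: "z \<in> span (VV S) \<Longrightarrow> inner (x - projJ DT S x) z = 0"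
  unfolding projJ_eq by (rule orth_proj_prop(2))

lemma PP_eq: "y \<in> span (VV S) \<Longrightarrow> (\<And>z. z \<in> span (VV S) \<Longrightarrow> inner (x - y) z = 0) \<Longrightarrow> projJ DT S x = y"
  unfolding projJ_eq by (rule orth_proj_eq)

lemma proj_alg:
  fixes D DTj E PE PD :: "'a::real_inner"
  assumes "D = DTj - E" and o1: "inner (E - PE) DTj = 0" and o2: "inner (E - PE) PE = 0" and "D - PD = PE - E"
  shows "inner D (D - PD) = inner E E - inner PE PE"
proof -
  have "inner D (D - PD) = inner (DTj - E) (PE - E)" unfolding assms(4) by (simp only: assms(1))
  also have "\<dots> = inner DTj (PE - E) - inner E (PE - E)" by (simp add: inner_diff_left)
  also have "inner DTj (PE - E) = - inner (E - PE) DTj" by (simp add: inner_diff_left inner_diff_right inner_commute)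
  also have "inner E (PE - E) = inner E PE - inner E E" by (simp add: inner_diff_right)
  also have "inner E PE = inner PE PE" using o2 by (simp add: inner_diff_left)
  finally show ?thesis using o1 by simp
qed

lemma per_j:
  assumes S: "S \<in> set_pmf J" and j: "j \<in> S"
  shows "inner (d j) (d j - projJ DT S (d j)) = inner (e j) (e j) - (norm (projJ DT S (e j)))^2"
    and "0 \<le> inner (d j) (d j - projJ DT S (d j))"
proof -
  let ?Pe = "projJ DT S (e j)" and ?Pd = "projJ DT S (d j)"
  have dtV: "dt j \<in> span (VV S)" using j by (intro span_base) auto
  have PeV: "?Pe \<in> span (VV S)" by (rule PP_in)
  have Pd: "?Pd = dt j - ?Pe"
  proof (rule PP_eq)
    show "dt j - ?Pe \<in> span (VV S)" using dtV PeV by (rule span_diff)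
    fix z assume z: "z \<in> span (VV S)"
    have eq: "d j - (dt j - ?Pe) = - (e j - ?Pe)" by (simp add: algebra_simps)
    have "inner (e j - ?Pe) z = 0" by (rule PP_orth[OF z])
    thus "inner (d j - (dt j - ?Pe)) z = 0" unfolding eq by (simp only: inner_minus_left)
  qed
  have o1: "inner (e j - ?Pe) (dt j) = 0" by (rule PP_orth[OF dtV])
  have o2: "inner (e j - ?Pe) ?Pe = 0" by (rule PP_orth[OF PeV])
  have eq2: "d j - ?Pd = ?Pe - e j" unfolding Pd by (simp add: algebra_simps)
  have "inner (d j) (d j - ?Pd) = inner (e j) (e j) - inner ?Pe ?Pe"
    by (rule proj_alg[OF _ o1 o2 eq2]) simp
  thus "inner (d j) (d j - ?Pd) = inner (e j) (e j) - (norm ?Pe)^2"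
    by (simp add: power2_norm_eq_inner)
  have PdV: "?Pd \<in> span (VV S)" by (rule PP_in)
  have o3: "inner (d j - ?Pd) ?Pd = 0" by (rule PP_orth[OF PdV])
  have "inner (d j) (d j - ?Pd) = inner (d j - ?Pd) (d j - ?Pd) + inner (d j - ?Pd) ?Pd"
    by (simp add: inner_diff_left inner_diff_right inner_commute)
  thus "0 \<le> inner (d j) (d j - ?Pd)" using o3 by simp
qed

lemma Pe_bound:
  assumes S: "S \<in> set_pmf J"
  shows "(norm (projJ DT S u))^2 \<le> (Ct D0 k t)^2 * (\<Sum>l\<in>S. (inner (dt l) u)^2)"
proof -
  have fin: "finite S" by simp
  let ?P = "projJ DT S u"
  have PV: "?P \<in> span (VV S)" by (rule PP_in)
  have "?P \<in> range (\<lambda>c. \<Sum>v\<in>VV S. c v *\<^sub>R v)" using PV span_finite[of "VV S"] fin by simp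
  then obtain c where c: "?P = (\<Sum>v\<in>VV S. c v *\<^sub>R v)" by auto
  have injS: "inj_on (\<lambda>j. dt j) S" using dt_inj by (rule inj_on_subset) simp
  define z where "z l = c (dt l)" for l
  have Pz: "?P = (\<Sum>l\<in>S. z l *\<^sub>R dt l)" unfolding c z_def by (simp add: sum.reindex[OF injS])
  let ?N = "norm ?P" and ?Z = "sqrt (\<Sum>l\<in>S. (z l)^2)" and ?B = "sqrt (\<Sum>l\<in>S. (inner (dt l) u)^2)"
  have o: "inner (u - ?P) ?P = 0" by (rule PP_orth[OF PV])
  have o': "inner u ?P - inner ?P ?P = 0" using o by (simp only: inner_diff_left)
  have "?N^2 = inner ?P ?P" by (simp add: power2_norm_eq_inner)
  also have "\<dots> = inner ?P u" using o' by (simp add: inner_commute)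
  also have "\<dots> = (\<Sum>l\<in>S. z l * inner (dt l) u)" unfolding Pz by (simp add: inner_sum_left)
  also have "\<dots> \<le> ?Z * ?B"
  proof -
    have "(\<Sum>l\<in>S. z l * inner (dt l) u)^2 \<le> (\<Sum>l\<in>S. (z l)^2) * (\<Sum>l\<in>S. (inner (dt l) u)^2)"
      by (rule Cauchy_Schwarz_ineq_sum)
    hence "sqrt ((\<Sum>l\<in>S. z l * inner (dt l) u)^2) \<le> sqrt ((\<Sum>l\<in>S. (z l)^2) * (\<Sum>l\<in>S. (inner (dt l) u)^2))"
      by (rule real_sqrt_le_mono)
    thus ?thesis by (simp add: real_sqrt_mult)
  qed
  finally have NZB: "?N^2 \<le> ?Z * ?B" .
  have low: "sig * ?Z \<le> ?N" unfolding Pz by (rule lower_dt[OF S])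
  have B0: "0 \<le> ?B" by (intro real_sqrt_ge_zero sum_nonneg) simp
  have "?N \<le> ?B / sig"
  proof (cases "?N = 0")
    case True thus ?thesis using B0 sig_pos by simp
  next
    case False
    hence Np: "0 < ?N" by simp
    have "sig * ?N^2 \<le> sig * (?Z * ?B)" using NZB sig_pos by (intro mult_left_mono) auto
    also have "\<dots> = (sig * ?Z) * ?B" by (simp add: mult_ac)
    also have "\<dots> \<le> ?N * ?B" using low B0 by (rule mult_right_mono)
    finally have "sig * ?N * ?N \<le> ?B * ?N" by (simp add: power2_eq_square mult_ac)
    hence "sig * ?N \<le> ?B" using Np by simp
    thus ?thesis using sig_pos by (simp add: field_simps)
  qed
  hence "?N^2 \<le> (?B / sig)^2" by (intro power_mono) auto
  also have "(?B / sig)^2 = (Ct D0 k t)^2 * ?B^2" unfolding Ct_eq by (simp add: power_divide)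
  also have "?B^2 = (\<Sum>l\<in>S. (inner (dt l) u)^2)"
  proof -
    have "0 \<le> (\<Sum>l\<in>S. (inner (dt l) u)^2)" by (intro sum_nonneg) auto
    thus ?thesis by simp
  qed
  finally show ?thesis .
qed


lemma Fjj_sq: "(inner (dt j) (e j))^2 \<le> t^2 / 4 * inner (e j) (e j)"
proof -
  have ee0: "0 \<le> inner (e j) (e j)" by simp
  have "inner (e j) (e j) \<le> t^2"
  proof -
    have "\<bar>v$j\<bar>^2 \<le> 1" by (rule power_le_one) (simp_all add: abs_v)
    hence "(v$j)^2 \<le> 1" by simp
    hence "(v$j)^2 * t^2 \<le> 1 * t^2" by (intro mult_right_mono) auto
    thus ?thesis using ee_le[of j] by simp
  qed
  hence "inner (e j) (e j) * inner (e j) (e j) \<le> t^2 * inner (e j) (e j)" using ee0 by (intro mult_right_mono)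
  thus ?thesis unfolding dte_ee by (simp add: power2_eq_square)
qed

lemma ineq1:
  "(1 - (Ct D0 k t * (a * sqrt (real k / real CARD('p)) + t))\<^sup>2) * (real k / real CARD('p)) * t\<^sup>2
     \<le> measure_pmf.expectation J (\<lambda>S. \<Sum>j\<in>S. inner (d j) (d j - projJ DT S (d j)))"
proof -
  let ?C = "Ct D0 k t" and ?x = "real k / real CARD('p)"
  let ?F = "\<lambda>l j. inner (dt l) (e j)"
  let ?X = "\<lambda>S. \<Sum>j\<in>S. inner (d j) (d j - projJ DT S (d j))"
  let ?A = "\<lambda>S. \<Sum>j\<in>S. (inner (e j) (e j) - ?C^2 * (?F j j)^2)"
  let ?B = "\<lambda>S. \<Sum>j\<in>S. \<Sum>l\<in>S-{j}. (?F l j)^2"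
  define SF where "SF = (\<Sum>j\<in>UNIV. (?F j j)^2)"
  define SG where "SG = (\<Sum>j\<in>UNIV. \<Sum>l\<in>UNIV-{j}. (?F l j)^2)"
  have x0: "0 \<le> ?x" by simp
  have x1: "?x \<le> 1" using k_le_p by simp
  have E0: "0 \<le> measure_pmf.expectation J ?X"
  proof -
    have "measure_pmf.expectation J (\<lambda>S. 0) \<le> measure_pmf.expectation J ?X"
      by (rule E_mono) (intro sum_nonneg, rule per_j(2), auto)
    thus ?thesis by (simp add: E_fin)
  qed
  have XZ: "measure_pmf.expectation J (\<lambda>S. ?A S + (-(?C^2)) * ?B S) \<le> measure_pmf.expectation J ?X"
  proof (rule E_mono)
    fix S assume S: "S \<in> set_pmf J"
    have fin: "finite S" by simp
    have "?A S + (-(?C^2)) * ?B S = (\<Sum>j\<in>S. inner (e j) (e j) - ?C^2 * (\<Sum>l\<in>S. (?F l j)^2))"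
    proof -
      have "(\<Sum>j\<in>S. inner (e j) (e j) - ?C^2 * (\<Sum>l\<in>S. (?F l j)^2))
          = (\<Sum>j\<in>S. (inner (e j) (e j) - ?C^2 * (?F j j)^2) + (-(?C^2)) * (\<Sum>l\<in>S-{j}. (?F l j)^2))"
      proof (rule sum.cong[OF refl])
        fix j assume j: "j \<in> S"
        show "inner (e j) (e j) - ?C^2 * (\<Sum>l\<in>S. (?F l j)^2)
            = (inner (e j) (e j) - ?C^2 * (?F j j)^2) + (-(?C^2)) * (\<Sum>l\<in>S-{j}. (?F l j)^2)"
          by (subst sum.remove[OF fin j]) (simp add: algebra_simps)
      qed
      also have "\<dots> = ?A S + (-(?C^2)) * ?B S" by (simp add: sum.distrib sum_distrib_left)
      finally show ?thesis by simp
    qed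
    also have "\<dots> \<le> ?X S"
    proof (rule sum_mono)
      fix j assume j: "j \<in> S"
      have "inner (d j) (d j - projJ DT S (d j)) = inner (e j) (e j) - (norm (projJ DT S (e j)))^2"
        by (rule per_j(1)[OF S j])
      moreover have "(norm (projJ DT S (e j)))^2 \<le> ?C^2 * (\<Sum>l\<in>S. (?F l j)^2)"
        by (rule Pe_bound[OF S])
      ultimately show "inner (e j) (e j) - ?C^2 * (\<Sum>l\<in>S. (?F l j)^2) \<le> inner (d j) (d j - projJ DT S (d j))"
        by simp
    qed
    finally show "?A S + (-(?C^2)) * ?B S \<le> ?X S" .
  qed
  have EA: "measure_pmf.expectation J ?A = ?x * (E2 - ?C^2 * SF)"
    unfolding E1 E2_def SF_def by (simp add: sum_subtractf sum_distrib_left)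
  have EB: "measure_pmf.expectation J ?B \<le> ?x * ?x * SG"
  proof -
    have "measure_pmf.expectation J ?B = P2f k CARD('p) * SG" unfolding E2s SG_def ..
    also have "\<dots> \<le> ?x * ?x * SG"
      using P2f_le unfolding SG_def by (intro mult_right_mono sum_nonneg) auto
    finally show ?thesis .
  qed
  have h1: "SF \<le> t^2 / 4 * E2"
    unfolding SF_def E2_def sum_distrib_left by (rule sum_mono) (rule Fjj_sq)
  have h2: "SG \<le> (a + t)^2 * E2 - SF"
  proof -
    have "SG = (\<Sum>j\<in>UNIV. (\<Sum>l\<in>UNIV. (?F l j)^2) - (?F j j)^2)"
      unfolding SG_def by (intro sum.cong refl) (simp add: sum_diff1)
    also have "\<dots> \<le> (\<Sum>j\<in>UNIV. (a + t)^2 * inner (e j) (e j) - (?F j j)^2)"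
      by (intro sum_mono diff_right_mono sum_dtu_sq)
    also have "\<dots> = (a + t)^2 * E2 - SF" unfolding E2_def SF_def by (simp add: sum_subtractf sum_distrib_left)
    finally show ?thesis .
  qed
  have C2: "0 \<le> ?C^2" by simp
  have SF0: "0 \<le> SF" unfolding SF_def by (intro sum_nonneg) simp
  have h3: "?x * (E2 - ?C^2 * SF) - ?C^2 * (?x * ?x * SG) \<le> measure_pmf.expectation J ?X"
  proof -
    have "measure_pmf.expectation J (\<lambda>S. ?A S + (-(?C^2)) * ?B S)
        = measure_pmf.expectation J ?A + (-(?C^2)) * measure_pmf.expectation J ?B"
      by (simp only: E_add E_cmult)
    moreover have "?C^2 * measure_pmf.expectation J ?B \<le> ?C^2 * (?x * ?x * SG)"
      using EB C2 by (rule mult_left_mono)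
    ultimately show ?thesis using XZ EA by linarith
  qed
  define L where "L = ?C^2 * ((1 - ?x) * t^2 / 4 + ?x * (a + t)^2)"
  have main: "?x * E2 * (1 - L) \<le> measure_pmf.expectation J ?X"
  proof -
    have xx: "0 \<le> ?x * ?x" by simp
    have "?x * ?x \<le> ?x * 1" by (rule mult_left_mono[OF x1 x0])
    hence xmx: "0 \<le> ?x - ?x * ?x" by simp
    have s1: "?x * ?x * SG \<le> ?x * ?x * ((a + t)^2 * E2 - SF)" using h2 xx by (rule mult_left_mono)
    have s2: "(?x - ?x * ?x) * SF \<le> (?x - ?x * ?x) * (t^2 / 4 * E2)" using h1 xmx by (rule mult_left_mono)
    have "?C^2 * (?x * SF + ?x * ?x * SG) \<le> ?C^2 * (?x * SF + ?x * ?x * ((a + t)^2 * E2 - SF))"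
      using s1 C2 by (intro mult_left_mono) auto
    also have "?x * SF + ?x * ?x * ((a + t)^2 * E2 - SF) = (?x - ?x * ?x) * SF + ?x * ?x * (a + t)^2 * E2"
      by (simp add: algebra_simps)
    also have "?C^2 * ((?x - ?x * ?x) * SF + ?x * ?x * (a + t)^2 * E2)
        \<le> ?C^2 * ((?x - ?x * ?x) * (t^2 / 4 * E2) + ?x * ?x * (a + t)^2 * E2)"
      using s2 C2 by (intro mult_left_mono) auto
    also have "?C^2 * ((?x - ?x * ?x) * (t^2 / 4 * E2) + ?x * ?x * (a + t)^2 * E2) = ?x * E2 * L"
      unfolding L_def by (simp add: algebra_simps, simp add: field_simps)
    finally have f1: "?C^2 * (?x * SF + ?x * ?x * SG) \<le> ?x * E2 * L" .
    have f2: "?x * (E2 - ?C^2 * SF) - ?C^2 * (?x * ?x * SG) = ?x * E2 - ?C^2 * (?x * SF + ?x * ?x * SG)"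
      by (simp add: algebra_simps)
    have f3: "?x * E2 * (1 - L) = ?x * E2 - ?x * E2 * L" using right_diff_distrib[of "?x * E2" 1 L] by (simp only: mult_1_right)
    show ?thesis using f1 f2 f3 h3 by linarith
  qed
  show ?thesis
    by (rule final_arith[OF x0 x1 refl a_ge1 Ct_ge1 t_nonneg t_le E2_le E2_ge main E0 L_def])
       (simp add: mult_ac)
qed

end


theorem lemma14:
  fixes D0 W :: "real^'p^'m" and v :: "real^'p" and t :: real and k :: nat
    and J :: "'p set pmf"
  assumes unit_cols: "\<forall>j. norm (column j D0) = 1"
    and supp_card: "\<forall>S\<in>set_pmf J. card S = k"
    and marg1: "\<forall>j. measure_pmf.prob J {S. j \<in> S} = real k / real CARD('p)"
    and marg2: "\<forall>i j. i \<noteq> j \<longrightarrow> measure_pmf.prob J {S. i \<in> S \<and> j \<in> S}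
                   = real k * (real k - 1) / (real CARD('p) * (real CARD('p) - 1))"
    and t_nonneg: "0 \<le> t"
    and coh: "real k * mu D0 t < 1 / 2"
    and W_orth: "\<forall>j. inner (column j W) (column j D0) = 0"
    and W_unit: "\<forall>j. norm (column j W) = 1"
    and v_unit: "norm v = 1"
  shows
    "(measure_pmf.expectation J
        (\<lambda>S. \<Sum>j\<in>S. inner (column j D0)
                (column j D0 - projJ (Dt D0 W v t) S (column j D0)))
      \<ge> (1 - (Ct D0 k t * (specnorm D0 * sqrt (real k / real CARD('p)) + t))\<^sup>2)
          * (real k / real CARD('p)) * t\<^sup>2)
  \<and>
    \<bar>measure_pmf.expectation J
        (\<lambda>S. \<Sum>i\<in>S. (\<Sum>l\<in>S. Theta D0 S i l * inner (column l D0) (column i D0))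
                    - (\<Sum>l\<in>S. Theta (Dt D0 W v t) S i l
                                  * inner (column l (Dt D0 W v t)) (column i D0)))\<bar>
      \<le> 3 * (Qt D0 k t)\<^sup>2 * t * (real k / real CARD('p)) * specnorm D0 * (real k * mu D0 t)
  \<and>
    \<bar>measure_pmf.expectation J
        (\<lambda>S. \<Sum>j\<in>S. Theta D0 S j j - Theta (Dt D0 W v t) S j j)\<bar>
      \<le> 8 * (Qt D0 k t) ^ 4 * t * (real k / real CARD('p)) * specnorm D0 * (real k * mu D0 t)"
proof (cases "k = 0")
  case True
  have empty: "S = {}" if "S \<in> set_pmf J" for S
  proof -
    have "card S = 0" using supp_card that True by auto
    thus ?thesis by simp
  qed
  have Ez: "measure_pmf.expectation J f = 0" if "\<And>S. S \<in> set_pmf J \<Longrightarrow> f S = 0" for f :: "'p set \<Rightarrow> real"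
  proof -
    have "measure_pmf.expectation J f = (\<Sum>S\<in>UNIV. pmf J S * f S)" by (rule E_fin)
    also have "\<dots> = 0"
    proof (rule sum.neutral, intro ballI)
      fix S :: "'p set"
      show "pmf J S * f S = 0"
      proof (cases "S \<in> set_pmf J")
        case True thus ?thesis using that by simp
      next
        case False hence "pmf J S = 0" by (simp add: set_pmf_iff)
        thus ?thesis by simp
      qed
    qed
    finally show ?thesis .
  qed
  have e1: "measure_pmf.expectation J
        (\<lambda>S. \<Sum>j\<in>S. inner (column j D0) (column j D0 - projJ (Dt D0 W v t) S (column j D0))) = 0"
    by (rule Ez) (drule empty, simp)
  have e2: "measure_pmf.expectation J
        (\<lambda>S. \<Sum>i\<in>S. (\<Sum>l\<in>S. Theta D0 S i l * inner (column l D0) (column i D0))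
                    - (\<Sum>l\<in>S. Theta (Dt D0 W v t) S i l
                                  * inner (column l (Dt D0 W v t)) (column i D0))) = 0"
    by (rule Ez) (drule empty, simp)
  have e3: "measure_pmf.expectation J (\<lambda>S. \<Sum>j\<in>S. Theta D0 S j j - Theta (Dt D0 W v t) S j j) = 0"
    by (rule Ez) (drule empty, simp)
  show ?thesis unfolding e1 e2 e3 using True by simp
next
  case False
  hence kpos: "1 \<le> k" by simp
  interpret L14 D0 W v t k J
    using assms kpos by unfold_locales auto
  show ?thesis using ineq1 ineq2 ineq3 by simp
qed

end
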